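(* Let $\Phi(s),\Phi'(s)$, $s\in[0,t]$, be time-dependent potentials, $\Theta$ a time-independent potential, and $0<\kappa'<\kappa$. Let $\lambda=\max\{\|\Phi\|_\kappa,\|\Phi'\|_\kappa\}$ and suppose $12\lambda t\leq\kappa-\kappa'$. Let $\Delta(s)=\Phi(s)-\Phi'(s)$, $\mathcal{M}=\frac{72}{\kappa'(\kappa-\kappa')}$ and $\mathcal{C}=1+\mathcal{M}\lambda t$ (so $\mathcal{C}\leq1+6/\kappa'$). Then $$\|\mathcal{E}_\Phi(t)\Theta-\mathcal{E}_{\Phi'}(t)\Theta\|_{\kappa'}\leq\mathcal{C}^3\mathcal{M}\,t\,\|\Theta\|_\kappa\|\Delta\|_\kappa.$$
   Context: $\Lambda$ is a finite set of sites, each carrying a finite-dimensional Hilbert space; $\|\cdot\|$ is the operator norm. A potential $Q$ is a family of operators $Q_Z$, $Z\subseteq\Lambda$, with $Q_Z$ supported on $Z$; differences are termwise. Norm: $\|Q\|_\kappa=\sup_{x\in\Lambda}\sum_{Z\ni x}e^{\kappa|Z|}\|Q_Z\|$; for time-dependent potentials on $[0,t]$, $\|\Phi\|_\kappa=\frac1t\int_0^t\|\Phi(s)\|_\kappa ds$. Commutator of potentials: $(\mathrm{ad}_\Phi\Theta)_Z=\sum_{Z_1\cap Z_2\neq\emptyset,Z_1\cup Z_2=Z}[\Phi_{Z_1},\Theta_{Z_2}]$. Dyson-series evolution: $\mathcal{E}_\Phi(t)\Theta=\sum_{n\geq0}i^n\int_0^t dt_1\int_0^{t_1}dt_2\cdots\int_0^{t_{n-1}}dt_n\,\mathrm{ad}_{\Phi(t_1)}\cdots\mathrm{ad}_{\Phi(t_n)}\Theta$.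 *)

theory Defs
  imports "HOL-Analysis.Analysis" "HOL-Library.Function_Algebras"
begin

text \<open>Concrete model: site x in Lambda carries the Hilbert space C^(d x).
  Basis of the total Hilbert space: configurations sigma with sigma x < d x on Lambda
  (and sigma x = 0 off Lambda). Operators are matrices indexed by configurations.\<close>

type_synonym 'a op = "('a \<Rightarrow> nat) \<Rightarrow> ('a \<Rightarrow> nat) \<Rightarrow> complex"
type_synonym 'a pot = "'a set \<Rightarrow> 'a op"

definition confs :: "'a set \<Rightarrow> ('a \<Rightarrow> nat) \<Rightarrow> ('a \<Rightarrow> nat) set" where
  "confs L d = {\<sigma>. (\<forall>x\<in>L. \<sigma> x < d x) \<and> (\<forall>x. x \<notin> L \<longrightarrow> \<sigma> x = 0)}"

definition op_mult :: "'a set \<Rightarrow> ('a \<Rightarrow> nat) \<Rightarrow> 'a op \<Rightarrow> 'a op \<Rightarrow> 'a op" where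
  "op_mult L d A B = (\<lambda>\<sigma> \<tau>. \<Sum>\<rho>\<in>confs L d. A \<sigma> \<rho> * B \<rho> \<tau>)"

definition op_comm :: "'a set \<Rightarrow> ('a \<Rightarrow> nat) \<Rightarrow> 'a op \<Rightarrow> 'a op \<Rightarrow> 'a op" where
  "op_comm L d A B = op_mult L d A B - op_mult L d B A"

definition op_apply :: "'a set \<Rightarrow> ('a \<Rightarrow> nat) \<Rightarrow> 'a op \<Rightarrow> (('a \<Rightarrow> nat) \<Rightarrow> complex)
    \<Rightarrow> (('a \<Rightarrow> nat) \<Rightarrow> complex)" where
  "op_apply L d A v = (\<lambda>\<sigma>. \<Sum>\<tau>\<in>confs L d. A \<sigma> \<tau> * v \<tau>)"

definition vnorm :: "'a set \<Rightarrow> ('a \<Rightarrow> nat) \<Rightarrow> (('a \<Rightarrow> nat) \<Rightarrow> complex) \<Rightarrow> real" where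
  "vnorm L d v = sqrt (\<Sum>\<sigma>\<in>confs L d. (cmod (v \<sigma>))\<^sup>2)"

definition opnorm :: "'a set \<Rightarrow> ('a \<Rightarrow> nat) \<Rightarrow> 'a op \<Rightarrow> real" where
  "opnorm L d A = Sup {vnorm L d (op_apply L d A v) | v. vnorm L d v \<le> 1}"

text \<open>A is supported on Z: A = B \<otimes> Id on the complement of Z.\<close>
definition supported_on :: "'a set \<Rightarrow> ('a \<Rightarrow> nat) \<Rightarrow> 'a op \<Rightarrow> 'a set \<Rightarrow> bool" where
  "supported_on L d A Z \<longleftrightarrow>
     (\<forall>\<sigma>\<in>confs L d. \<forall>\<tau>\<in>confs L d. (\<exists>x\<in>L - Z. \<sigma> x \<noteq> \<tau> x) \<longrightarrow> A \<sigma> \<tau> = 0) \<and>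
     (\<forall>\<sigma>\<in>confs L d. \<forall>\<tau>\<in>confs L d. \<forall>\<sigma>'\<in>confs L d. \<forall>\<tau>'\<in>confs L d.
        (\<forall>x\<in>Z. \<sigma> x = \<sigma>' x \<and> \<tau> x = \<tau>' x) \<and> (\<forall>x\<in>L - Z. \<sigma> x = \<tau> x \<and> \<sigma>' x = \<tau>' x)
        \<longrightarrow> A \<sigma> \<tau> = A \<sigma>' \<tau>')"

definition is_potential :: "'a set \<Rightarrow> ('a \<Rightarrow> nat) \<Rightarrow> 'a pot \<Rightarrow> bool" where
  "is_potential L d Q \<longleftrightarrow> (\<forall>Z. Z \<subseteq> L \<longrightarrow> supported_on L d (Q Z) Z)"

definition pot_norm :: "'a set \<Rightarrow> ('a \<Rightarrow> nat) \<Rightarrow> real \<Rightarrow> 'a pot \<Rightarrow> real" where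
  "pot_norm L d \<kappa> Q = Max (insert 0 ((\<lambda>x. \<Sum>Z\<in>{Z. Z \<subseteq> L \<and> x \<in> Z}.
       exp (\<kappa> * real (card Z)) * opnorm L d (Q Z)) ` L))"

definition tpot_norm :: "'a set \<Rightarrow> ('a \<Rightarrow> nat) \<Rightarrow> real \<Rightarrow> real \<Rightarrow> (real \<Rightarrow> 'a pot) \<Rightarrow> real" where
  "tpot_norm L d \<kappa> t \<Phi> = (1 / t) * integral {0..t} (\<lambda>s. pot_norm L d \<kappa> (\<Phi> s))"

definition pot_ad :: "'a set \<Rightarrow> ('a \<Rightarrow> nat) \<Rightarrow> 'a pot \<Rightarrow> 'a pot \<Rightarrow> 'a pot" where
  "pot_ad L d P Q = (\<lambda>Z. \<Sum>(Z1, Z2)\<in>{(Z1, Z2). Z1 \<union> Z2 = Z \<and> Z1 \<inter> Z2 \<noteq> {}}.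
       op_comm L d (P Z1) (Q Z2))"

primrec dyson_term :: "'a set \<Rightarrow> ('a \<Rightarrow> nat) \<Rightarrow> (real \<Rightarrow> 'a pot) \<Rightarrow> 'a pot \<Rightarrow> nat \<Rightarrow> real \<Rightarrow> 'a pot" where
  "dyson_term L d \<Phi> \<Theta> 0 u = \<Theta>"
| "dyson_term L d \<Phi> \<Theta> (Suc n) u = (\<lambda>Z \<sigma> \<tau>.
     integral {0..u} (\<lambda>s. pot_ad L d (\<Phi> s) (dyson_term L d \<Phi> \<Theta> n s) Z \<sigma> \<tau>))"

definition evol :: "'a set \<Rightarrow> ('a \<Rightarrow> nat) \<Rightarrow> (real \<Rightarrow> 'a pot) \<Rightarrow> real \<Rightarrow> 'a pot \<Rightarrow> 'a pot" where
  "evol L d \<Phi> t \<Theta> = (\<lambda>Z \<sigma> \<tau>. \<Sum>n. \<i> ^ n * dyson_term L d \<Phi> \<Theta> n t Z \<sigma> \<tau>)"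

definition regular_tpot :: "'a set \<Rightarrow> ('a \<Rightarrow> nat) \<Rightarrow> real \<Rightarrow> (real \<Rightarrow> 'a pot) \<Rightarrow> bool" where
  "regular_tpot L d t \<Phi> \<longleftrightarrow> (\<forall>s\<in>{0..t}. is_potential L d (\<Phi> s)) \<and>
     (\<forall>Z. Z \<subseteq> L \<longrightarrow> (\<forall>\<sigma>\<in>confs L d. \<forall>\<tau>\<in>confs L d.
        (\<lambda>s. \<Phi> s Z \<sigma> \<tau>) \<in> borel_measurable (lebesgue_on {0..t}) \<and>
        bounded ((\<lambda>s. \<Phi> s Z \<sigma> \<tau>) ` {0..t})))"

end

theory Submission
  imports Defs
begin

lemma finite_confs:
  assumes "finite L" shows "finite (confs L d)"
proof -
  let ?B = "{..Max (insert 0 (d ` L))}"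
  have "confs L d \<subseteq> {f. \<forall>x. (x \<in> L \<longrightarrow> f x \<in> ?B) \<and> (x \<notin> L \<longrightarrow> f x = 0)}"
  proof
    fix f assume "f \<in> confs L d"
    then have h: "\<forall>x\<in>L. f x < d x" "\<forall>x. x \<notin> L \<longrightarrow> f x = 0" unfolding confs_def by auto
    have "\<forall>x\<in>L. f x \<le> Max (insert 0 (d ` L))"
    proof
      fix x assume "x \<in> L"
      then have "d x \<le> Max (insert 0 (d ` L))" using assms by (intro Max_ge) auto
      then show "f x \<le> Max (insert 0 (d ` L))" using h(1) \<open>x \<in> L\<close> by fastforce
    qed
    then show "f \<in> {f. \<forall>x. (x \<in> L \<longrightarrow> f x \<in> ?B) \<and> (x \<notin> L \<longrightarrow> f x = 0)}" using h by auto
  qed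
  moreover have "finite {f. \<forall>x. (x \<in> L \<longrightarrow> f x \<in> ?B) \<and> (x \<notin> L \<longrightarrow> f x = 0)}"
    by (rule finite_set_of_finite_funs) (use assms in auto)
  ultimately show ?thesis by (rule finite_subset)
qed

lemma sum_fun_apply: "(sum f A) x = (\<Sum>a\<in>A. f a x)"
  by (induction A rule: infinite_finite_induct) auto

lemma vnorm_L2: "vnorm L d v = L2_set (\<lambda>\<sigma>. cmod (v \<sigma>)) (confs L d)"
  unfolding vnorm_def L2_set_def by simp

lemma vnorm_nonneg: "0 \<le> vnorm L d v"
  unfolding vnorm_def by (simp add: sum_nonneg)

lemma vnorm_triangle: "vnorm L d (\<lambda>\<sigma>. u \<sigma> + w \<sigma>) \<le> vnorm L d u + vnorm L d w"
proof -
  have "vnorm L d (\<lambda>\<sigma>. u \<sigma> + w \<sigma>) \<le> L2_set (\<lambda>\<sigma>. cmod (u \<sigma>) + cmod (w \<sigma>)) (confs L d)"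
    unfolding vnorm_L2 by (rule L2_set_mono) (auto simp: norm_triangle_ineq)
  also have "\<dots> \<le> vnorm L d u + vnorm L d w" unfolding vnorm_L2 by (rule L2_set_triangle_ineq)
  finally show ?thesis .
qed

lemma vnorm_scale: "vnorm L d (\<lambda>\<sigma>. c * u \<sigma>) = cmod c * vnorm L d u"
  unfolding vnorm_L2 by (simp add: norm_mult L2_set_right_distrib)

lemma vnorm_cong: "(\<And>\<sigma>. \<sigma> \<in> confs L d \<Longrightarrow> u \<sigma> = w \<sigma>) \<Longrightarrow> vnorm L d u = vnorm L d w"
  unfolding vnorm_def by simp

lemma vnorm_ge_entry: "finite L \<Longrightarrow> \<sigma> \<in> confs L d \<Longrightarrow> cmod (v \<sigma>) \<le> vnorm L d v"
  unfolding vnorm_L2 by (rule member_le_L2_set) (auto simp: finite_confs)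

lemma vnorm_le_sum: "vnorm L d v \<le> (\<Sum>\<sigma>\<in>confs L d. cmod (v \<sigma>))"
  unfolding vnorm_L2 by (rule L2_set_le_sum) auto

lemma vnorm_cs: "cmod (\<Sum>\<sigma>\<in>confs L d. cnj (w \<sigma>) * u \<sigma>) \<le> vnorm L d w * vnorm L d u"
proof -
  have "cmod (\<Sum>\<sigma>\<in>confs L d. cnj (w \<sigma>) * u \<sigma>) \<le> (\<Sum>\<sigma>\<in>confs L d. \<bar>cmod (w \<sigma>)\<bar> * \<bar>cmod (u \<sigma>)\<bar>)"
    by (rule order_trans[OF norm_sum]) (simp add: norm_mult)
  also have "\<dots> \<le> vnorm L d w * vnorm L d u" unfolding vnorm_L2 by (rule L2_set_mult_ineq)
  finally show ?thesis .
qed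

lemma vnorm_zero_iff: "finite L \<Longrightarrow> vnorm L d v = 0 \<longleftrightarrow> (\<forall>\<sigma>\<in>confs L d. v \<sigma> = 0)"
  unfolding vnorm_def by (simp add: sum_nonneg_eq_0_iff finite_confs)

lemma vnorm_self: "(\<Sum>\<sigma>\<in>confs L d. cnj (v \<sigma>) * v \<sigma>) = complex_of_real ((vnorm L d v)^2)"
proof -
  have "(\<Sum>\<sigma>\<in>confs L d. cnj (v \<sigma>) * v \<sigma>) = (\<Sum>\<sigma>\<in>confs L d. complex_of_real ((cmod (v \<sigma>))^2))"
    proof (rule sum.cong)
    fix x show "cnj (v x) * v x = complex_of_real ((cmod (v x))^2)"
      using complex_norm_square[of "v x"] by (simp only: mult.commute)
  qed simp
  also have "\<dots> = complex_of_real ((vnorm L d v)^2)" unfolding vnorm_def by (simp add: sum_nonneg)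
  finally show ?thesis .
qed


definition l1 :: "'a set \<Rightarrow> ('a \<Rightarrow> nat) \<Rightarrow> 'a op \<Rightarrow> real" where
  "l1 L d A = (\<Sum>\<sigma>\<in>confs L d. \<Sum>\<tau>\<in>confs L d. cmod (A \<sigma> \<tau>))"

context
  fixes L :: "'a set" and d :: "'a \<Rightarrow> nat"
  assumes finL: "finite L"
begin

lemma finCF: "finite (confs L d)" using finL by (rule finite_confs)

lemma l1_nonneg: "0 \<le> l1 L d A" unfolding l1_def by (simp add: sum_nonneg)

lemma op_apply_l1: "vnorm L d (op_apply L d A v) \<le> l1 L d A * vnorm L d v"
proof -
  have "vnorm L d (op_apply L d A v) \<le> (\<Sum>\<sigma>\<in>confs L d. cmod (op_apply L d A v \<sigma>))"
    by (rule vnorm_le_sum)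
  also have "\<dots> \<le> (\<Sum>\<sigma>\<in>confs L d. \<Sum>\<tau>\<in>confs L d. cmod (A \<sigma> \<tau>) * vnorm L d v)"
  proof (rule sum_mono)
    fix \<sigma> assume "\<sigma> \<in> confs L d"
    have "cmod (op_apply L d A v \<sigma>) \<le> (\<Sum>\<tau>\<in>confs L d. cmod (A \<sigma> \<tau> * v \<tau>))"
      unfolding op_apply_def by (rule norm_sum)
    also have "\<dots> \<le> (\<Sum>\<tau>\<in>confs L d. cmod (A \<sigma> \<tau>) * vnorm L d v)"
      by (rule sum_mono) (auto simp: norm_mult intro!: mult_left_mono vnorm_ge_entry finL)
    finally show "cmod (op_apply L d A v \<sigma>) \<le> (\<Sum>\<tau>\<in>confs L d. cmod (A \<sigma> \<tau>) * vnorm L d v)" .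
  qed
  also have "\<dots> = l1 L d A * vnorm L d v" unfolding l1_def by (simp add: sum_distrib_right)
  finally show ?thesis .
qed

lemma opnorm_bdd: "bdd_above {vnorm L d (op_apply L d A v) | v. vnorm L d v \<le> 1}"
proof (rule bdd_aboveI)
  fix y assume "y \<in> {vnorm L d (op_apply L d A v) | v. vnorm L d v \<le> 1}"
  then obtain v where "y = vnorm L d (op_apply L d A v)" "vnorm L d v \<le> 1" by auto
  then show "y \<le> l1 L d A"
    using op_apply_l1[of A v] l1_nonneg[of A] by (metis mult_left_le order_trans)
qed

lemma op_apply_zero_vec: "op_apply L d A (\<lambda>_. 0) = (\<lambda>_. 0)"
  unfolding op_apply_def by simp

lemma vnorm_zero_vec: "vnorm L d (\<lambda>_. 0) = 0" unfolding vnorm_def by simp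

lemma opnorm_ge: "vnorm L d v \<le> 1 \<Longrightarrow> vnorm L d (op_apply L d A v) \<le> opnorm L d A"
  unfolding opnorm_def by (rule cSup_upper) (auto intro: opnorm_bdd)

lemma opnorm_nonneg: "0 \<le> opnorm L d A"
  using opnorm_ge[of "\<lambda>_. 0" A] by (simp add: vnorm_zero_vec op_apply_zero_vec)

lemma opnorm_le: "(\<And>v. vnorm L d v \<le> 1 \<Longrightarrow> vnorm L d (op_apply L d A v) \<le> c) \<Longrightarrow> opnorm L d A \<le> c"
  unfolding opnorm_def by (rule cSup_least) (auto intro: exI[of _ "\<lambda>_. 0"] simp: vnorm_zero_vec)

lemma op_apply_scale: "op_apply L d A (\<lambda>\<tau>. c * v \<tau>) = (\<lambda>\<sigma>. c * op_apply L d A v \<sigma>)"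
  unfolding op_apply_def by (auto simp: sum_distrib_left ac_simps)

lemma opnorm_bound: "vnorm L d (op_apply L d A v) \<le> opnorm L d A * vnorm L d v"
proof (cases "vnorm L d v = 0")
  case True
  then have "\<forall>\<sigma>\<in>confs L d. v \<sigma> = 0" using vnorm_zero_iff[OF finL] by auto
  then have "op_apply L d A v = (\<lambda>_. 0)" unfolding op_apply_def by auto
  then show ?thesis using True by (simp add: vnorm_zero_vec)
next
  case False
  then have pos: "0 < vnorm L d v" using vnorm_nonneg[of L d v] by simp
  define w where "w = (\<lambda>\<tau>. complex_of_real (1 / vnorm L d v) * v \<tau>)"
  have "vnorm L d w = 1" unfolding w_def vnorm_scale using pos by (simp add: norm_divide)
  then have "vnorm L d (op_apply L d A w) \<le> opnorm L d A" by (intro opnorm_ge) simp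
  moreover have "vnorm L d (op_apply L d A w) = vnorm L d (op_apply L d A v) / vnorm L d v"
    unfolding w_def op_apply_scale vnorm_scale using pos by (simp add: norm_divide)
  ultimately show ?thesis using pos by (simp add: divide_le_eq)
qed

lemma opnorm_le_l1: "opnorm L d A \<le> l1 L d A"
  by (rule opnorm_le) (metis op_apply_l1 l1_nonneg mult_left_le order_trans)

lemma opnorm_leI: "0 \<le> c \<Longrightarrow> (\<And>v. vnorm L d (op_apply L d A v) \<le> c * vnorm L d v) \<Longrightarrow> opnorm L d A \<le> c"
  by (rule opnorm_le) (metis mult_left_le order_trans)

lemma opnorm_cong: "(\<And>\<sigma> \<tau>. \<sigma> \<in> confs L d \<Longrightarrow> \<tau> \<in> confs L d \<Longrightarrow> A \<sigma> \<tau> = B \<sigma> \<tau>) \<Longrightarrow> opnorm L d A = opnorm L d B"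
proof -
  assume h: "\<And>\<sigma> \<tau>. \<sigma> \<in> confs L d \<Longrightarrow> \<tau> \<in> confs L d \<Longrightarrow> A \<sigma> \<tau> = B \<sigma> \<tau>"
  have "vnorm L d (op_apply L d A v) = vnorm L d (op_apply L d B v)" for v
    by (rule vnorm_cong) (auto simp: op_apply_def h intro!: sum.cong)
  then show ?thesis unfolding opnorm_def by simp
qed

lemma op_apply_add: "op_apply L d (A + B) v = (\<lambda>\<sigma>. op_apply L d A v \<sigma> + op_apply L d B v \<sigma>)"
  unfolding op_apply_def by (auto simp: distrib_right sum.distrib)

lemma opnorm_add: "opnorm L d (A + B) \<le> opnorm L d A + opnorm L d B"
proof (rule opnorm_leI)
  show "0 \<le> opnorm L d A + opnorm L d B" using opnorm_nonneg by (simp add: add_nonneg_nonneg)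
  fix v
  have "vnorm L d (op_apply L d (A + B) v) \<le> vnorm L d (op_apply L d A v) + vnorm L d (op_apply L d B v)"
    unfolding op_apply_add by (rule vnorm_triangle)
  also have "\<dots> \<le> opnorm L d A * vnorm L d v + opnorm L d B * vnorm L d v"
    by (intro add_mono opnorm_bound)
  finally show "vnorm L d (op_apply L d (A + B) v) \<le> (opnorm L d A + opnorm L d B) * vnorm L d v"
    by (simp add: distrib_right)
qed

lemma opnorm_smult: "opnorm L d (\<lambda>\<sigma> \<tau>. c * A \<sigma> \<tau>) \<le> cmod c * opnorm L d A"
proof (rule opnorm_leI)
  show "0 \<le> cmod c * opnorm L d A" by (simp add: opnorm_nonneg)
  fix v
  have "op_apply L d (\<lambda>\<sigma> \<tau>. c * A \<sigma> \<tau>) v = (\<lambda>\<sigma>. c * op_apply L d A v \<sigma>)"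
    unfolding op_apply_def by (auto simp: sum_distrib_left ac_simps)
  then have "vnorm L d (op_apply L d (\<lambda>\<sigma> \<tau>. c * A \<sigma> \<tau>) v) = cmod c * vnorm L d (op_apply L d A v)"
    by (simp add: vnorm_scale)
  also have "\<dots> \<le> cmod c * (opnorm L d A * vnorm L d v)" by (intro mult_left_mono opnorm_bound) auto
  finally show "vnorm L d (op_apply L d (\<lambda>\<sigma> \<tau>. c * A \<sigma> \<tau>) v) \<le> cmod c * opnorm L d A * vnorm L d v"
    by (simp add: ac_simps)
qed

lemma opnorm_uminus_le: "opnorm L d (- A) \<le> opnorm L d A"
proof -
  have "- A = (\<lambda>\<sigma> \<tau>. (-1) * A \<sigma> \<tau>)" by (auto simp: fun_eq_iff)
  then have "opnorm L d (- A) = opnorm L d (\<lambda>\<sigma> \<tau>. (-1) * A \<sigma> \<tau>)" by simp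
  also have "\<dots> \<le> opnorm L d A" using opnorm_smult[of "-1" A] by simp
  finally show ?thesis .
qed

lemma opnorm_uminus: "opnorm L d (- A) = opnorm L d A"
  using opnorm_uminus_le[of A] opnorm_uminus_le[of "- A"] by simp

lemma opnorm_diff: "opnorm L d (A - B) \<le> opnorm L d A + opnorm L d B"
  using opnorm_add[of A "- B"] by (simp add: opnorm_uminus)

lemma opnorm_zero: "opnorm L d 0 = 0"
proof -
  have "opnorm L d 0 \<le> 0"
    by (rule opnorm_leI) (auto simp: op_apply_def vnorm_zero_vec zero_fun_def)
  then show ?thesis using opnorm_nonneg[of 0] by simp
qed

lemma zero_op: "(0::'a op) = (\<lambda>_ _. 0)" by (simp add: fun_eq_iff)

lemma opnorm_zero': "opnorm L d (\<lambda>_ _. 0) = 0" using opnorm_zero by (simp add: zero_op)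

lemma opnorm_sum: "opnorm L d (\<Sum>i\<in>I. A i) \<le> (\<Sum>i\<in>I. opnorm L d (A i))"
proof (induction I rule: infinite_finite_induct)
  case (infinite I) then show ?case using opnorm_zero' by (simp add: zero_op)
next
  case empty
  then show ?case using opnorm_zero' by (simp add: zero_op)
next
  case (insert x F)
  show ?case unfolding sum.insert[OF insert.hyps] using opnorm_add[of "A x" "sum A F"] insert.IH by linarith
qed

lemma op_apply_mult: "op_apply L d (op_mult L d A B) v = op_apply L d A (op_apply L d B v)"
  unfolding op_apply_def op_mult_def
  by (auto simp: sum_distrib_right sum_distrib_left ac_simps intro: sum.swap)

lemma opnorm_mult: "opnorm L d (op_mult L d A B) \<le> opnorm L d A * opnorm L d B"
proof (rule opnorm_leI)
  show "0 \<le> opnorm L d A * opnorm L d B" by (simp add: opnorm_nonneg)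
  fix v
  have "vnorm L d (op_apply L d (op_mult L d A B) v) \<le> opnorm L d A * vnorm L d (op_apply L d B v)"
    unfolding op_apply_mult by (rule opnorm_bound)
  also have "\<dots> \<le> opnorm L d A * (opnorm L d B * vnorm L d v)"
    by (intro mult_left_mono opnorm_bound opnorm_nonneg)
  finally show "vnorm L d (op_apply L d (op_mult L d A B) v) \<le> opnorm L d A * opnorm L d B * vnorm L d v"
    by (simp add: ac_simps)
qed

lemma opnorm_comm: "opnorm L d (op_comm L d A B) \<le> 2 * opnorm L d A * opnorm L d B"
  unfolding op_comm_def
  using opnorm_diff[of "op_mult L d A B" "op_mult L d B A"] opnorm_mult[of A B] opnorm_mult[of B A]
  by (simp add: ac_simps)

lemma entry_le_opnorm:
  assumes "\<sigma> \<in> confs L d" "\<tau> \<in> confs L d"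
  shows "cmod (A \<sigma> \<tau>) \<le> opnorm L d A"
proof -
  define v where "v = (\<lambda>\<rho>. if \<rho> = \<tau> then (1::complex) else 0)"
  have "(\<Sum>\<sigma>\<in>confs L d. (cmod (v \<sigma>))\<^sup>2) = (\<Sum>\<sigma>\<in>confs L d. if \<sigma> = \<tau> then 1 else 0)"
    by (rule sum.cong) (auto simp: v_def)
  also have "\<dots> = 1" using assms finCF by simp
  finally have "vnorm L d v = 1" unfolding vnorm_def by simp
  have "op_apply L d A v \<sigma> = A \<sigma> \<tau>" unfolding op_apply_def v_def using assms finCF
    by (simp add: if_distrib sum.delta cong: if_cong)
  then have "cmod (A \<sigma> \<tau>) \<le> vnorm L d (op_apply L d A v)"
    using vnorm_ge_entry[OF finL assms(1)] by metis
  also have "\<dots> \<le> opnorm L d A" using \<open>vnorm L d v = 1\<close> by (intro opnorm_ge) simp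
  finally show ?thesis .
qed

end

definition psum :: "'a set \<Rightarrow> ('a \<Rightarrow> nat) \<Rightarrow> real \<Rightarrow> 'a pot \<Rightarrow> 'a \<Rightarrow> real" where
  "psum L d \<kappa> Q x = (\<Sum>Z\<in>{Z. Z \<subseteq> L \<and> x \<in> Z}. exp (\<kappa> * real (card Z)) * opnorm L d (Q Z))"

lemma pot_norm_psum: "pot_norm L d \<kappa> Q = Max (insert 0 (psum L d \<kappa> Q ` L))"
  unfolding pot_norm_def psum_def by simp

context
  fixes L :: "'a set" and d :: "'a \<Rightarrow> nat"
  assumes finL: "finite L"
begin

lemma finZx: "finite {Z. Z \<subseteq> L \<and> x \<in> Z}"
  by (rule finite_subset[of _ "Pow L"]) (auto simp: finL)

lemma pot_norm_nonneg: "0 \<le> pot_norm L d \<kappa> Q"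
  unfolding pot_norm_psum by (rule Max_ge) (auto simp: finL)

lemma psum_le_pot_norm: "x \<in> L \<Longrightarrow> psum L d \<kappa> Q x \<le> pot_norm L d \<kappa> Q"
  unfolding pot_norm_psum by (rule Max_ge) (auto simp: finL)

lemma pot_norm_le: "0 \<le> c \<Longrightarrow> (\<And>x. x \<in> L \<Longrightarrow> psum L d \<kappa> Q x \<le> c) \<Longrightarrow> pot_norm L d \<kappa> Q \<le> c"
  unfolding pot_norm_psum by (subst Max_le_iff) (auto simp: finL)

lemma psum_nonneg: "0 \<le> psum L d \<kappa> Q x"
  unfolding psum_def by (auto intro!: sum_nonneg simp: opnorm_nonneg[OF finL])

lemma term_le_pot_norm:
  assumes "Z \<subseteq> L" "x \<in> Z"
  shows "exp (\<kappa> * real (card Z)) * opnorm L d (Q Z) \<le> pot_norm L d \<kappa> Q"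
proof -
  have "exp (\<kappa> * real (card Z)) * opnorm L d (Q Z) \<le> psum L d \<kappa> Q x"
    unfolding psum_def
    by (rule member_le_sum[of Z _ "\<lambda>Z. exp (\<kappa> * real (card Z)) * opnorm L d (Q Z)"])
       (use assms finZx in \<open>auto simp: opnorm_nonneg[OF finL]\<close>)
  also have "\<dots> \<le> pot_norm L d \<kappa> Q" using assms by (intro psum_le_pot_norm) auto
  finally show ?thesis .
qed

lemma opnorm_le_pot_norm:
  assumes "Z \<subseteq> L" "x \<in> Z" "0 \<le> \<kappa>"
  shows "opnorm L d (Q Z) \<le> pot_norm L d \<kappa> Q"
proof -
  have "1 \<le> exp (\<kappa> * real (card Z))" using assms by simp
  then have "opnorm L d (Q Z) \<le> exp (\<kappa> * real (card Z)) * opnorm L d (Q Z)"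
    using opnorm_nonneg[OF finL, of d "Q Z"] by (simp add: mult_le_cancel_right1)
  then show ?thesis using term_le_pot_norm[OF assms(1,2), of \<kappa> Q] by linarith
qed

lemma pot_norm_mono_le:
  assumes "\<And>Z x. Z \<subseteq> L \<Longrightarrow> x \<in> Z \<Longrightarrow> exp (\<kappa>1 * real (card Z)) * opnorm L d (P Z) \<le> exp (\<kappa>2 * real (card Z)) * opnorm L d (Q Z)"
  shows "pot_norm L d \<kappa>1 P \<le> pot_norm L d \<kappa>2 Q"
proof (rule pot_norm_le)
  show "0 \<le> pot_norm L d \<kappa>2 Q" by (rule pot_norm_nonneg)
  fix x assume "x \<in> L"
  have "psum L d \<kappa>1 P x \<le> psum L d \<kappa>2 Q x" unfolding psum_def by (rule sum_mono) (auto intro: assms)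
  also have "\<dots> \<le> pot_norm L d \<kappa>2 Q" using \<open>x \<in> L\<close> by (rule psum_le_pot_norm)
  finally show "psum L d \<kappa>1 P x \<le> pot_norm L d \<kappa>2 Q" .
qed

lemma pot_norm_mono: "\<kappa>1 \<le> \<kappa>2 \<Longrightarrow> pot_norm L d \<kappa>1 Q \<le> pot_norm L d \<kappa>2 Q"
  by (rule pot_norm_mono_le) (auto intro!: mult_right_mono opnorm_nonneg[OF finL] mult_right_mono)

lemma pot_norm_cong:
  assumes "\<And>Z \<sigma> \<tau>. Z \<subseteq> L \<Longrightarrow> Z \<noteq> {} \<Longrightarrow> \<sigma> \<in> confs L d \<Longrightarrow> \<tau> \<in> confs L d \<Longrightarrow> P Z \<sigma> \<tau> = Q Z \<sigma> \<tau>"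
  shows "pot_norm L d \<kappa> P = pot_norm L d \<kappa> Q"
proof -
  have "psum L d \<kappa> P x = psum L d \<kappa> Q x" for x
    unfolding psum_def by (rule sum.cong) (auto intro!: arg_cong[where f="\<lambda>u. _ * u"] opnorm_cong[OF finL] assms)
  then show ?thesis unfolding pot_norm_psum by simp
qed

lemma pot_norm_add: "pot_norm L d \<kappa> (P + Q) \<le> pot_norm L d \<kappa> P + pot_norm L d \<kappa> Q"
proof (rule pot_norm_le)
  show "0 \<le> pot_norm L d \<kappa> P + pot_norm L d \<kappa> Q" using pot_norm_nonneg by (simp add: add_nonneg_nonneg)
  fix x assume x: "x \<in> L"
  have "psum L d \<kappa> (P + Q) x \<le> psum L d \<kappa> P x + psum L d \<kappa> Q x"
    unfolding psum_def sum.distrib[symmetric] distrib_left[symmetric]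
    by (rule sum_mono) (auto intro!: mult_left_mono opnorm_add[OF finL])
  also have "\<dots> \<le> pot_norm L d \<kappa> P + pot_norm L d \<kappa> Q" using x by (intro add_mono psum_le_pot_norm)
  finally show "psum L d \<kappa> (P + Q) x \<le> pot_norm L d \<kappa> P + pot_norm L d \<kappa> Q" .
qed

lemma pot_norm_smult: "pot_norm L d \<kappa> (\<lambda>Z \<sigma> \<tau>. c * Q Z \<sigma> \<tau>) \<le> cmod c * pot_norm L d \<kappa> Q"
proof (rule pot_norm_le)
  show "0 \<le> cmod c * pot_norm L d \<kappa> Q" using pot_norm_nonneg by simp
  fix x assume x: "x \<in> L"
  have "psum L d \<kappa> (\<lambda>Z \<sigma> \<tau>. c * Q Z \<sigma> \<tau>) x \<le> cmod c * psum L d \<kappa> Q x"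
    unfolding psum_def sum_distrib_left
    by (rule sum_mono) (auto intro!: mult_left_mono opnorm_smult[OF finL, THEN order_trans] simp: algebra_simps)
  also have "\<dots> \<le> cmod c * pot_norm L d \<kappa> Q" using x by (intro mult_left_mono psum_le_pot_norm) auto
  finally show "psum L d \<kappa> (\<lambda>Z \<sigma> \<tau>. c * Q Z \<sigma> \<tau>) x \<le> cmod c * pot_norm L d \<kappa> Q" .
qed

lemma pot_norm_uminus: "pot_norm L d \<kappa> (- Q) = pot_norm L d \<kappa> Q"
proof -
  have "psum L d \<kappa> (- Q) x = psum L d \<kappa> Q x" for x
    unfolding psum_def using opnorm_uminus[OF finL] by simp
  then show ?thesis unfolding pot_norm_psum by simp
qed

lemma pot_norm_diff: "pot_norm L d \<kappa> (P - Q) \<le> pot_norm L d \<kappa> P + pot_norm L d \<kappa> Q"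
  using pot_norm_add[of \<kappa> P "- Q"] by (simp add: pot_norm_uminus)

lemma zero_pot: "(0::'a pot) = (\<lambda>_ _ _. 0)" by (simp add: fun_eq_iff)

lemma pot_norm_zero: "pot_norm L d \<kappa> (\<lambda>_ _ _. 0) = 0"
proof -
  have "psum L d \<kappa> (\<lambda>_ _ _. 0) x = 0" for x
    unfolding psum_def using opnorm_zero'[OF finL] by simp
  then have "pot_norm L d \<kappa> (\<lambda>_ _ _. 0) \<le> 0" by (intro pot_norm_le) auto
  then show ?thesis using pot_norm_nonneg[of \<kappa> "\<lambda>_ _ _. 0"] by linarith
qed

lemma pot_norm_sum: "pot_norm L d \<kappa> (\<Sum>i\<in>I. Q i) \<le> (\<Sum>i\<in>I. pot_norm L d \<kappa> (Q i))"
proof (induction I rule: infinite_finite_induct)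
  case (infinite I) then show ?case using pot_norm_zero by (simp add: zero_pot)
next
  case empty then show ?case using pot_norm_zero by (simp add: zero_pot)
next
  case (insert x F)
  show ?case unfolding sum.insert[OF insert.hyps] using pot_norm_add[of \<kappa> "Q x" "sum Q F"] insert.IH by linarith
qed

definition Wn :: "'a set \<Rightarrow> ('a \<Rightarrow> nat) \<Rightarrow> real \<Rightarrow> 'a pot \<Rightarrow> real" where
  "Wn L' d' \<kappa> Q = (\<Sum>Z\<in>Pow L'. exp (\<kappa> * real (card Z)) * l1 L' d' (Q Z))"

lemma pot_norm_le_Wn: "pot_norm L d \<kappa> Q \<le> Wn L d \<kappa> Q"
proof (rule pot_norm_le)
  show "0 \<le> Wn L d \<kappa> Q" unfolding Wn_def by (auto intro!: sum_nonneg simp: l1_nonneg[OF finL])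
  fix x assume "x \<in> L"
  have "psum L d \<kappa> Q x \<le> (\<Sum>Z\<in>{Z. Z \<subseteq> L \<and> x \<in> Z}. exp (\<kappa> * real (card Z)) * l1 L d (Q Z))"
    unfolding psum_def by (rule sum_mono) (auto intro!: mult_left_mono opnorm_le_l1[OF finL])
  also have "\<dots> \<le> Wn L d \<kappa> Q" unfolding Wn_def
    by (rule sum_mono2) (auto simp: finL l1_nonneg[OF finL])
  finally show "psum L d \<kappa> Q x \<le> Wn L d \<kappa> Q" .
qed

end

lemma exp_card_bound:
  fixes n :: real
  assumes "0 \<le> n" "\<kappa>1 < \<kappa>2"
  shows "exp (\<kappa>1 * n) * n \<le> exp (\<kappa>2 * n) / (exp 1 * (\<kappa>2 - \<kappa>1))"
proof -
  have "(\<kappa>2 - \<kappa>1) * n \<le> exp ((\<kappa>2 - \<kappa>1) * n - 1)"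
    using exp_ge_add_one_self[of "(\<kappa>2 - \<kappa>1) * n - 1"] by simp
  then have "(\<kappa>2 - \<kappa>1) * n * exp 1 \<le> exp ((\<kappa>2 - \<kappa>1) * n)"
    by (simp add: exp_diff pos_le_divide_eq)
  then have "exp (\<kappa>1 * n) * ((\<kappa>2 - \<kappa>1) * n * exp 1) \<le> exp (\<kappa>1 * n) * exp ((\<kappa>2 - \<kappa>1) * n)"
    by (intro mult_left_mono) auto
  also have "\<dots> = exp (\<kappa>2 * n)" by (simp add: exp_add[symmetric] algebra_simps)
  finally show ?thesis using assms by (simp add: pos_le_divide_eq ac_simps)
qed

context
  fixes L :: "'a set" and d :: "'a \<Rightarrow> nat"
  assumes finL: "finite L"
begin

lemma psum_Pow: "psum L d \<kappa> Q y = (\<Sum>Z\<in>Pow L. if y \<in> Z then exp (\<kappa> * real (card Z)) * opnorm L d (Q Z) else 0)"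
proof -
  have "psum L d \<kappa> Q y = (\<Sum>Z\<in>{Z \<in> Pow L. y \<in> Z}. exp (\<kappa> * real (card Z)) * opnorm L d (Q Z))"
    unfolding psum_def by (rule sum.cong) auto
  also have "\<dots> = (\<Sum>Z\<in>Pow L. if y \<in> Z then exp (\<kappa> * real (card Z)) * opnorm L d (Q Z) else 0)"
    by (rule sum.inter_filter) (simp add: finL)
  finally show ?thesis .
qed

lemma half_bound:
  assumes x: "x \<in> L" and k: "\<kappa>1 < \<kappa>2"
  shows "(\<Sum>Z1\<in>Pow L. \<Sum>Z2\<in>Pow L. if x \<in> Z1 \<and> Z1 \<inter> Z2 \<noteq> {} then
            (exp (\<kappa>1 * real (card Z1)) * opnorm L d (A Z1)) * (exp (\<kappa>1 * real (card Z2)) * opnorm L d (B Z2)) else 0)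
     \<le> pot_norm L d \<kappa>2 A * pot_norm L d \<kappa>1 B / (exp 1 * (\<kappa>2 - \<kappa>1))"
proof -
  define \<alpha> where "\<alpha> Z = exp (\<kappa>1 * real (card Z)) * opnorm L d (A Z)" for Z
  define \<beta> where "\<beta> Z = exp (\<kappa>1 * real (card Z)) * opnorm L d (B Z)" for Z
  have \<alpha>0: "0 \<le> \<alpha> Z" for Z unfolding \<alpha>_def by (simp add: opnorm_nonneg[OF finL])
  have \<beta>0: "0 \<le> \<beta> Z" for Z unfolding \<beta>_def by (simp add: opnorm_nonneg[OF finL])
  let ?NB = "pot_norm L d \<kappa>1 B"
  have NB0: "0 \<le> ?NB" by (rule pot_norm_nonneg[OF finL])
  have inner: "(\<Sum>Z2\<in>Pow L. if Z1 \<inter> Z2 \<noteq> {} then \<beta> Z2 else 0) \<le> real (card Z1) * ?NB"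
    if Z1: "Z1 \<subseteq> L" for Z1
  proof -
    have fZ1: "finite Z1" using Z1 finL finite_subset by blast
    have "(\<Sum>Z2\<in>Pow L. if Z1 \<inter> Z2 \<noteq> {} then \<beta> Z2 else 0) \<le> (\<Sum>Z2\<in>Pow L. real (card (Z1 \<inter> Z2)) * \<beta> Z2)"
    proof (rule sum_mono)
      fix Z2 assume "Z2 \<in> Pow L"
      show "(if Z1 \<inter> Z2 \<noteq> {} then \<beta> Z2 else 0) \<le> real (card (Z1 \<inter> Z2)) * \<beta> Z2"
      proof (cases "Z1 \<inter> Z2 = {}")
        case False
        then have "1 \<le> card (Z1 \<inter> Z2)" using fZ1 by (simp add: Suc_le_eq card_gt_0_iff)
        then have "1 \<le> real (card (Z1 \<inter> Z2))" by simp
        then show ?thesis using False \<beta>0[of Z2] by (simp add: mult_le_cancel_right1)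
      qed (simp add: \<beta>0)
    qed
    also have "\<dots> = (\<Sum>Z2\<in>Pow L. \<Sum>y\<in>Z1. if y \<in> Z2 then \<beta> Z2 else 0)"
    proof (rule sum.cong)
      fix Z2 assume "Z2 \<in> Pow L"
      have "{y \<in> Z1. y \<in> Z2} = Z1 \<inter> Z2" by auto
      then have "(\<Sum>y\<in>Z1. if y \<in> Z2 then \<beta> Z2 else 0) = (\<Sum>y\<in>Z1 \<inter> Z2. \<beta> Z2)"
        using fZ1 by (simp add: sum.inter_filter[symmetric])
      then show "real (card (Z1 \<inter> Z2)) * \<beta> Z2 = (\<Sum>y\<in>Z1. if y \<in> Z2 then \<beta> Z2 else 0)" by simp
    qed simp
    also have "\<dots> = (\<Sum>y\<in>Z1. \<Sum>Z2\<in>Pow L. if y \<in> Z2 then \<beta> Z2 else 0)" by (rule sum.swap)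
    also have "\<dots> = (\<Sum>y\<in>Z1. psum L d \<kappa>1 B y)" unfolding psum_Pow \<beta>_def by simp
    also have "\<dots> \<le> (\<Sum>y\<in>Z1. ?NB)" by (rule sum_mono) (use Z1 in \<open>auto intro!: psum_le_pot_norm[OF finL]\<close>)
    also have "\<dots> = real (card Z1) * ?NB" by simp
    finally show ?thesis .
  qed
  have "(\<Sum>Z1\<in>Pow L. \<Sum>Z2\<in>Pow L. if x \<in> Z1 \<and> Z1 \<inter> Z2 \<noteq> {} then \<alpha> Z1 * \<beta> Z2 else 0)
      = (\<Sum>Z1\<in>Pow L. if x \<in> Z1 then \<alpha> Z1 * (\<Sum>Z2\<in>Pow L. if Z1 \<inter> Z2 \<noteq> {} then \<beta> Z2 else 0) else 0)"
    by (rule sum.cong) (auto simp: sum_distrib_left intro!: sum.cong)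
  also have "\<dots> \<le> (\<Sum>Z1\<in>Pow L. if x \<in> Z1 then \<alpha> Z1 * (real (card Z1) * ?NB) else 0)"
    by (rule sum_mono) (auto intro!: mult_left_mono inner \<alpha>0)
  also have "\<dots> \<le> (\<Sum>Z1\<in>Pow L. if x \<in> Z1 then exp (\<kappa>2 * real (card Z1)) * opnorm L d (A Z1) * (?NB / (exp 1 * (\<kappa>2 - \<kappa>1))) else 0)"
  proof (rule sum_mono)
    fix Z1 assume "Z1 \<in> Pow L"
    have "exp (\<kappa>1 * real (card Z1)) * real (card Z1) \<le> exp (\<kappa>2 * real (card Z1)) / (exp 1 * (\<kappa>2 - \<kappa>1))"
      by (rule exp_card_bound) (use k in auto)
    then have "exp (\<kappa>1 * real (card Z1)) * real (card Z1) * (opnorm L d (A Z1) * ?NB)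
        \<le> exp (\<kappa>2 * real (card Z1)) / (exp 1 * (\<kappa>2 - \<kappa>1)) * (opnorm L d (A Z1) * ?NB)"
      by (rule mult_right_mono) (simp add: NB0 opnorm_nonneg[OF finL])
    then show "(if x \<in> Z1 then \<alpha> Z1 * (real (card Z1) * ?NB) else 0) \<le> (if x \<in> Z1 then exp (\<kappa>2 * real (card Z1)) * opnorm L d (A Z1) * (?NB / (exp 1 * (\<kappa>2 - \<kappa>1))) else 0)"
      unfolding \<alpha>_def by (simp add: ac_simps)
  qed
  also have "\<dots> = psum L d \<kappa>2 A x * (?NB / (exp 1 * (\<kappa>2 - \<kappa>1)))"
    unfolding psum_Pow sum_distrib_right by (rule sum.cong) auto
  also have "\<dots> \<le> pot_norm L d \<kappa>2 A * (?NB / (exp 1 * (\<kappa>2 - \<kappa>1)))"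
    by (rule mult_right_mono) (use x k NB0 in \<open>auto intro!: psum_le_pot_norm[OF finL]\<close>)
  finally show ?thesis unfolding \<alpha>_def \<beta>_def by simp
qed

end

context
  fixes L :: "'a set" and d :: "'a \<Rightarrow> nat"
  assumes finL: "finite L"
begin

lemma opnorm_pot_ad:
  "opnorm L d (pot_ad L d A B Z) \<le> (\<Sum>p\<in>{(Z1, Z2). Z1 \<union> Z2 = Z \<and> Z1 \<inter> Z2 \<noteq> {}}. 2 * opnorm L d (A (fst p)) * opnorm L d (B (snd p)))"
  unfolding pot_ad_def
  by (rule order_trans[OF opnorm_sum[OF finL]], rule sum_mono) (auto intro: opnorm_comm[OF finL])

lemma regroup:
  assumes x: "x \<in> L"
  shows "(\<Sum>Z\<in>{Z. Z \<subseteq> L \<and> x \<in> Z}. exp (\<kappa> * real (card Z)) *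
           (\<Sum>p\<in>{(Z1, Z2). Z1 \<union> Z2 = Z \<and> Z1 \<inter> Z2 \<noteq> {}}. h (fst p) (snd p)))
       = (\<Sum>Z1\<in>Pow L. \<Sum>Z2\<in>Pow L. if x \<in> Z1 \<union> Z2 \<and> Z1 \<inter> Z2 \<noteq> {} then exp (\<kappa> * real (card (Z1 \<union> Z2))) * h Z1 Z2 else 0)"
proof -
  let ?Zx = "{Z. Z \<subseteq> L \<and> x \<in> Z}"
  have fZx: "finite ?Zx" by (rule finZx[OF finL])
  have step1: "exp (\<kappa> * real (card Z)) * (\<Sum>p\<in>{(Z1, Z2). Z1 \<union> Z2 = Z \<and> Z1 \<inter> Z2 \<noteq> {}}. h (fst p) (snd p))
     = (\<Sum>Z1\<in>Pow L. \<Sum>Z2\<in>Pow L. if Z1 \<union> Z2 = Z \<and> Z1 \<inter> Z2 \<noteq> {} then exp (\<kappa> * real (card Z)) * h Z1 Z2 else 0)"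
    if Z: "Z \<in> ?Zx" for Z
  proof -
    have "{(Z1, Z2). Z1 \<union> Z2 = Z \<and> Z1 \<inter> Z2 \<noteq> {}} = {p \<in> Pow L \<times> Pow L. fst p \<union> snd p = Z \<and> fst p \<inter> snd p \<noteq> {}}"
      using Z by auto
    then have "(\<Sum>p\<in>{(Z1, Z2). Z1 \<union> Z2 = Z \<and> Z1 \<inter> Z2 \<noteq> {}}. h (fst p) (snd p))
       = (\<Sum>p\<in>{p \<in> Pow L \<times> Pow L. fst p \<union> snd p = Z \<and> fst p \<inter> snd p \<noteq> {}}. h (fst p) (snd p))"
      by simp
    also have "\<dots> = (\<Sum>p\<in>Pow L \<times> Pow L. if fst p \<union> snd p = Z \<and> fst p \<inter> snd p \<noteq> {} then h (fst p) (snd p) else 0)"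
      by (rule sum.inter_filter) (simp add: finL)
    also have "\<dots> = (\<Sum>Z1\<in>Pow L. \<Sum>Z2\<in>Pow L. if Z1 \<union> Z2 = Z \<and> Z1 \<inter> Z2 \<noteq> {} then h Z1 Z2 else 0)"
      unfolding sum.cartesian_product by (simp add: case_prod_unfold)
    finally show ?thesis by (simp add: sum_distrib_left if_distrib cong: if_cong)
  qed
  have "(\<Sum>Z\<in>?Zx. exp (\<kappa> * real (card Z)) * (\<Sum>p\<in>{(Z1, Z2). Z1 \<union> Z2 = Z \<and> Z1 \<inter> Z2 \<noteq> {}}. h (fst p) (snd p)))
     = (\<Sum>Z\<in>?Zx. \<Sum>Z1\<in>Pow L. \<Sum>Z2\<in>Pow L. if Z1 \<union> Z2 = Z \<and> Z1 \<inter> Z2 \<noteq> {} then exp (\<kappa> * real (card Z)) * h Z1 Z2 else 0)"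
    by (rule sum.cong) (auto simp: step1)
  also have "\<dots> = (\<Sum>Z1\<in>Pow L. \<Sum>Z\<in>?Zx. \<Sum>Z2\<in>Pow L. if Z1 \<union> Z2 = Z \<and> Z1 \<inter> Z2 \<noteq> {} then exp (\<kappa> * real (card Z)) * h Z1 Z2 else 0)"
    by (rule sum.swap)
  also have "\<dots> = (\<Sum>Z1\<in>Pow L. \<Sum>Z2\<in>Pow L. \<Sum>Z\<in>?Zx. if Z1 \<union> Z2 = Z \<and> Z1 \<inter> Z2 \<noteq> {} then exp (\<kappa> * real (card Z)) * h Z1 Z2 else 0)"
    by (rule sum.cong[OF refl], rule sum.swap)
  also have "\<dots> = (\<Sum>Z1\<in>Pow L. \<Sum>Z2\<in>Pow L. if x \<in> Z1 \<union> Z2 \<and> Z1 \<inter> Z2 \<noteq> {} then exp (\<kappa> * real (card (Z1 \<union> Z2))) * h Z1 Z2 else 0)"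
  proof (intro sum.cong[OF refl])
    fix Z1 Z2 assume "Z1 \<in> Pow L" "Z2 \<in> Pow L"
    have "(\<Sum>Z\<in>?Zx. if Z1 \<union> Z2 = Z \<and> Z1 \<inter> Z2 \<noteq> {} then exp (\<kappa> * real (card Z)) * h Z1 Z2 else 0)
        = (if Z1 \<inter> Z2 \<noteq> {} then (\<Sum>Z\<in>?Zx. if Z = Z1 \<union> Z2 then exp (\<kappa> * real (card Z)) * h Z1 Z2 else 0) else 0)"
      by (auto intro!: sum.cong simp: eq_commute)
    also have "\<dots> = (if x \<in> Z1 \<union> Z2 \<and> Z1 \<inter> Z2 \<noteq> {} then exp (\<kappa> * real (card (Z1 \<union> Z2))) * h Z1 Z2 else 0)"
      using \<open>Z1 \<in> Pow L\<close> \<open>Z2 \<in> Pow L\<close> fZx by (simp add: sum.delta)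
    finally show "(\<Sum>Z\<in>?Zx. if Z1 \<union> Z2 = Z \<and> Z1 \<inter> Z2 \<noteq> {} then exp (\<kappa> * real (card Z)) * h Z1 Z2 else 0)
        = (if x \<in> Z1 \<union> Z2 \<and> Z1 \<inter> Z2 \<noteq> {} then exp (\<kappa> * real (card (Z1 \<union> Z2))) * h Z1 Z2 else 0)" .
  qed
  finally show ?thesis .
qed

lemma comm_bound:
  assumes k1: "0 \<le> \<kappa>1" and k: "\<kappa>1 < \<kappa>2"
  shows "pot_norm L d \<kappa>1 (pot_ad L d A B) \<le> 4 * exp (- \<kappa>1) / (exp 1 * (\<kappa>2 - \<kappa>1)) * pot_norm L d \<kappa>2 A * pot_norm L d \<kappa>2 B"
proof (rule pot_norm_le[OF finL])
  let ?c = "4 * exp (- \<kappa>1) / (exp 1 * (\<kappa>2 - \<kappa>1))"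
  let ?D = "exp 1 * (\<kappa>2 - \<kappa>1)"
  have D0: "0 < ?D" using k by simp
  let ?a = "\<lambda>Z. opnorm L d (A Z)" and ?b = "\<lambda>Z. opnorm L d (B Z)"
  define \<alpha> where "\<alpha> Z = exp (\<kappa>1 * real (card Z)) * opnorm L d (A Z)" for Z
  define \<beta> where "\<beta> Z = exp (\<kappa>1 * real (card Z)) * opnorm L d (B Z)" for Z
  have a0: "0 \<le> ?a Z" "0 \<le> ?b Z" for Z by (simp_all add: opnorm_nonneg[OF finL])
  have NA: "0 \<le> pot_norm L d \<kappa>2 A" "0 \<le> pot_norm L d \<kappa>2 B" by (simp_all add: pot_norm_nonneg[OF finL])
  show "0 \<le> ?c * pot_norm L d \<kappa>2 A * pot_norm L d \<kappa>2 B" using D0 NA by simp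
  fix x assume x: "x \<in> L"
  have "psum L d \<kappa>1 (pot_ad L d A B) x \<le> (\<Sum>Z\<in>{Z. Z \<subseteq> L \<and> x \<in> Z}. exp (\<kappa>1 * real (card Z)) *
           (\<Sum>p\<in>{(Z1, Z2). Z1 \<union> Z2 = Z \<and> Z1 \<inter> Z2 \<noteq> {}}. 2 * ?a (fst p) * ?b (snd p)))"
    unfolding psum_def by (rule sum_mono) (auto intro!: mult_left_mono opnorm_pot_ad)
  also have "\<dots> = (\<Sum>Z1\<in>Pow L. \<Sum>Z2\<in>Pow L. if x \<in> Z1 \<union> Z2 \<and> Z1 \<inter> Z2 \<noteq> {} then exp (\<kappa>1 * real (card (Z1 \<union> Z2))) * (2 * ?a Z1 * ?b Z2) else 0)"
    by (rule regroup[OF x])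
  also have "\<dots> \<le> (\<Sum>Z1\<in>Pow L. \<Sum>Z2\<in>Pow L. 2 * exp (- \<kappa>1) *
        ((if x \<in> Z1 \<and> Z1 \<inter> Z2 \<noteq> {} then \<alpha> Z1 * \<beta> Z2 else 0) + (if x \<in> Z2 \<and> Z2 \<inter> Z1 \<noteq> {} then \<beta> Z2 * \<alpha> Z1 else 0)))"
  proof (intro sum_mono)
    fix Z1 Z2 assume Z: "Z1 \<in> Pow L" "Z2 \<in> Pow L"
    show "(if x \<in> Z1 \<union> Z2 \<and> Z1 \<inter> Z2 \<noteq> {} then exp (\<kappa>1 * real (card (Z1 \<union> Z2))) * (2 * ?a Z1 * ?b Z2) else 0)
       \<le> 2 * exp (- \<kappa>1) * ((if x \<in> Z1 \<and> Z1 \<inter> Z2 \<noteq> {} then \<alpha> Z1 * \<beta> Z2 else 0) + (if x \<in> Z2 \<and> Z2 \<inter> Z1 \<noteq> {} then \<beta> Z2 * \<alpha> Z1 else 0))"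
    proof (cases "x \<in> Z1 \<union> Z2 \<and> Z1 \<inter> Z2 \<noteq> {}")
      case True
      have f: "finite Z1" "finite Z2" using Z finL finite_subset by auto
      have "card (Z1 \<inter> Z2) \<ge> 1" using True f by (simp add: Suc_le_eq card_gt_0_iff)
      moreover have "card Z1 + card Z2 = card (Z1 \<union> Z2) + card (Z1 \<inter> Z2)" using f by (rule card_Un_Int)
      ultimately have "real (card (Z1 \<union> Z2)) \<le> real (card Z1) + real (card Z2) - 1" by linarith
      then have "\<kappa>1 * real (card (Z1 \<union> Z2)) \<le> \<kappa>1 * (real (card Z1) + real (card Z2) - 1)"
        by (rule mult_left_mono[OF _ k1])
      then have e: "exp (\<kappa>1 * real (card (Z1 \<union> Z2))) \<le> exp (- \<kappa>1) * exp (\<kappa>1 * real (card Z1)) * exp (\<kappa>1 * real (card Z2))"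
        by (simp add: exp_add[symmetric] algebra_simps)
      have "exp (\<kappa>1 * real (card (Z1 \<union> Z2))) * (2 * ?a Z1 * ?b Z2) \<le> (exp (- \<kappa>1) * exp (\<kappa>1 * real (card Z1)) * exp (\<kappa>1 * real (card Z2))) * (2 * ?a Z1 * ?b Z2)"
        using e by (rule mult_right_mono) (simp add: a0)
      also have "\<dots> = 2 * exp (- \<kappa>1) * (\<alpha> Z1 * \<beta> Z2)" unfolding \<alpha>_def \<beta>_def by (simp add: ac_simps)
      also have "\<dots> \<le> 2 * exp (- \<kappa>1) * ((if x \<in> Z1 \<and> Z1 \<inter> Z2 \<noteq> {} then \<alpha> Z1 * \<beta> Z2 else 0) + (if x \<in> Z2 \<and> Z2 \<inter> Z1 \<noteq> {} then \<beta> Z2 * \<alpha> Z1 else 0))"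
        using True a0 unfolding \<alpha>_def \<beta>_def by (auto simp: Int_commute ac_simps)
      finally show ?thesis using True by simp
    next
      case False
      then show ?thesis unfolding \<alpha>_def \<beta>_def by (auto simp: a0 intro!: add_nonneg_nonneg mult_nonneg_nonneg)
    qed
  qed
  also have "\<dots> = 2 * exp (- \<kappa>1) * ((\<Sum>Z1\<in>Pow L. \<Sum>Z2\<in>Pow L. if x \<in> Z1 \<and> Z1 \<inter> Z2 \<noteq> {} then \<alpha> Z1 * \<beta> Z2 else 0)
      + (\<Sum>Z2\<in>Pow L. \<Sum>Z1\<in>Pow L. if x \<in> Z2 \<and> Z2 \<inter> Z1 \<noteq> {} then \<beta> Z2 * \<alpha> Z1 else 0))"
  proof -
    let ?X = "\<lambda>Z1 Z2. if x \<in> Z1 \<and> Z1 \<inter> Z2 \<noteq> {} then \<alpha> Z1 * \<beta> Z2 else 0"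
    let ?Y = "\<lambda>Z1 Z2. if x \<in> Z2 \<and> Z2 \<inter> Z1 \<noteq> {} then \<beta> Z2 * \<alpha> Z1 else 0"
    let ?e = "2 * exp (- \<kappa>1)"
    have "(\<Sum>Z1\<in>Pow L. \<Sum>Z2\<in>Pow L. ?e * (?X Z1 Z2 + ?Y Z1 Z2))
       = (\<Sum>Z1\<in>Pow L. \<Sum>Z2\<in>Pow L. ?e * ?X Z1 Z2) + (\<Sum>Z1\<in>Pow L. \<Sum>Z2\<in>Pow L. ?e * ?Y Z1 Z2)"
      by (simp only: distrib_left sum.distrib)
    also have "(\<Sum>Z1\<in>Pow L. \<Sum>Z2\<in>Pow L. ?e * ?X Z1 Z2) = ?e * (\<Sum>Z1\<in>Pow L. \<Sum>Z2\<in>Pow L. ?X Z1 Z2)"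
      by (simp only: sum_distrib_left)
    also have "(\<Sum>Z1\<in>Pow L. \<Sum>Z2\<in>Pow L. ?e * ?Y Z1 Z2) = ?e * (\<Sum>Z1\<in>Pow L. \<Sum>Z2\<in>Pow L. ?Y Z1 Z2)"
      by (simp only: sum_distrib_left)
    also have "(\<Sum>Z1\<in>Pow L. \<Sum>Z2\<in>Pow L. ?Y Z1 Z2) = (\<Sum>Z2\<in>Pow L. \<Sum>Z1\<in>Pow L. ?Y Z1 Z2)"
      by (rule sum.swap)
    finally show ?thesis by (simp only: distrib_left)
  qed
  also have "\<dots> \<le> 2 * exp (- \<kappa>1) * (pot_norm L d \<kappa>2 A * pot_norm L d \<kappa>1 B / ?D + pot_norm L d \<kappa>2 B * pot_norm L d \<kappa>1 A / ?D)"
  proof -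
    have h1: "(\<Sum>Z1\<in>Pow L. \<Sum>Z2\<in>Pow L. if x \<in> Z1 \<and> Z1 \<inter> Z2 \<noteq> {} then \<alpha> Z1 * \<beta> Z2 else 0)
        \<le> pot_norm L d \<kappa>2 A * pot_norm L d \<kappa>1 B / ?D"
      unfolding \<alpha>_def \<beta>_def by (rule half_bound[OF finL x k])
    have h2: "(\<Sum>Z2\<in>Pow L. \<Sum>Z1\<in>Pow L. if x \<in> Z2 \<and> Z2 \<inter> Z1 \<noteq> {} then \<beta> Z2 * \<alpha> Z1 else 0)
        \<le> pot_norm L d \<kappa>2 B * pot_norm L d \<kappa>1 A / ?D"
      unfolding \<alpha>_def \<beta>_def by (rule half_bound[OF finL x k])
    show ?thesis by (intro mult_left_mono add_mono h1 h2) simp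
  qed
  also have "\<dots> \<le> 2 * exp (- \<kappa>1) * (pot_norm L d \<kappa>2 A * pot_norm L d \<kappa>2 B / ?D + pot_norm L d \<kappa>2 B * pot_norm L d \<kappa>2 A / ?D)"
    using D0 NA k by (intro mult_left_mono add_mono divide_right_mono mult_left_mono pot_norm_mono[OF finL]) auto
  also have "\<dots> = ?c * pot_norm L d \<kappa>2 A * pot_norm L d \<kappa>2 B" by (simp add: field_simps)
  finally show "psum L d \<kappa>1 (pot_ad L d A B) x \<le> ?c * pot_norm L d \<kappa>2 A * pot_norm L d \<kappa>2 B" .
qed

end

definition QC :: "complex set" where "QC = (\<lambda>(a, b). Complex (of_rat a) (of_rat b)) ` UNIV"

lemma countable_QC: "countable QC" unfolding QC_def by simp

lemma zero_QC: "0 \<in> QC" unfolding QC_def by (auto intro!: image_eqI[of _ _ "(0, 0)"] simp: complex_eq_iff)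

lemma QC_dense: assumes "0 < e" shows "\<exists>q\<in>QC. cmod (q - z) < e"
proof -
  obtain a where a: "a \<in> \<rat>" "Re z - e/2 < a" "a < Re z + e/2" using Rats_dense_in_real[of "Re z - e/2" "Re z + e/2"] assms by auto
  obtain b where b: "b \<in> \<rat>" "Im z - e/2 < b" "b < Im z + e/2" using Rats_dense_in_real[of "Im z - e/2" "Im z + e/2"] assms by auto
  obtain qa where qa: "a = of_rat qa" using a(1) Rats_cases by blast
  obtain qb where qb: "b = of_rat qb" using b(1) Rats_cases by blast
  have "Complex a b \<in> QC" unfolding QC_def qa qb by (auto intro!: image_eqI[of _ _ "(qa, qb)"])
  moreover have "cmod (Complex a b - z) < e"
  proof -
    have "cmod (Complex a b - z) \<le> \<bar>a - Re z\<bar> + \<bar>b - Im z\<bar>" using cmod_le[of "Complex a b - z"] by simp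
    also have "\<dots> < e" using a b by auto
    finally show ?thesis .
  qed
  ultimately show ?thesis by blast
qed

definition VQ :: "'a set \<Rightarrow> ('a \<Rightarrow> nat) \<Rightarrow> (('a \<Rightarrow> nat) \<Rightarrow> complex) set" where
  "VQ L d = {v. (\<forall>\<sigma>. \<sigma> \<notin> confs L d \<longrightarrow> v \<sigma> = 0) \<and> (\<forall>\<sigma>\<in>confs L d. v \<sigma> \<in> QC) \<and> vnorm L d v \<le> 1}"

context
  fixes L :: "'a set" and d :: "'a \<Rightarrow> nat"
  assumes finL: "finite L"
begin

lemma countable_VQ: "countable (VQ L d)"
proof -
  let ?e = "\<lambda>f \<sigma>. if \<sigma> \<in> confs L d then f \<sigma> else (0::complex)"
  have "VQ L d \<subseteq> ?e ` (Pi\<^sub>E (confs L d) (\<lambda>_. QC))"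
  proof
    fix v assume v: "v \<in> VQ L d"
    have "v = ?e (restrict v (confs L d))" using v unfolding VQ_def by (auto simp: fun_eq_iff)
    moreover have "restrict v (confs L d) \<in> Pi\<^sub>E (confs L d) (\<lambda>_. QC)" using v unfolding VQ_def by auto
    ultimately show "v \<in> ?e ` (Pi\<^sub>E (confs L d) (\<lambda>_. QC))" by blast
  qed
  moreover have "countable (?e ` (Pi\<^sub>E (confs L d) (\<lambda>_. QC)))"
    by (intro countable_image countable_PiE finCF[OF finL] countable_QC)
  ultimately show ?thesis by (rule countable_subset)
qed

lemma zero_VQ: "(\<lambda>_. 0) \<in> VQ L d" unfolding VQ_def by (simp add: zero_QC vnorm_zero_vec[OF finL])

lemma op_apply_vadd: "op_apply L d A (\<lambda>\<tau>. u \<tau> + w \<tau>) = (\<lambda>\<sigma>. op_apply L d A u \<sigma> + op_apply L d A w \<sigma>)"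
  unfolding op_apply_def by (auto simp: distrib_left sum.distrib)

lemma vnorm_op_diff: "vnorm L d (op_apply L d A u) \<le> vnorm L d (op_apply L d A w) + l1 L d A * vnorm L d (\<lambda>\<tau>. u \<tau> - w \<tau>)"
proof -
  have "u = (\<lambda>\<tau>. w \<tau> + (u \<tau> - w \<tau>))" by simp
  then have "vnorm L d (op_apply L d A u) = vnorm L d (\<lambda>\<sigma>. op_apply L d A w \<sigma> + op_apply L d A (\<lambda>\<tau>. u \<tau> - w \<tau>) \<sigma>)"
    by (metis op_apply_vadd)
  also have "\<dots> \<le> vnorm L d (op_apply L d A w) + vnorm L d (op_apply L d A (\<lambda>\<tau>. u \<tau> - w \<tau>))" by (rule vnorm_triangle)
  also have "\<dots> \<le> vnorm L d (op_apply L d A w) + l1 L d A * vnorm L d (\<lambda>\<tau>. u \<tau> - w \<tau>)"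
    by (intro add_left_mono op_apply_l1[OF finL])
  finally show ?thesis .
qed

lemma VQ_approx:
  assumes v: "vnorm L d v \<le> 1" and g: "0 < \<gamma>"
  shows "\<exists>w\<in>VQ L d. vnorm L d (op_apply L d A v) \<le> vnorm L d (op_apply L d A w) + \<gamma>"
proof -
  define K where "K = l1 L d A + 1"
  have K: "0 < K" unfolding K_def using l1_nonneg[OF finL, of d A] by simp
  define \<eta> where "\<eta> = min 1 (\<gamma> / (2 * K))"
  have \<eta>: "0 < \<eta>" "\<eta> \<le> 1" "\<eta> \<le> \<gamma> / (2 * K)" unfolding \<eta>_def using K g by auto
  define c where "c = real (card (confs L d)) + 1"
  have c: "0 < c" "real (card (confs L d)) \<le> c" unfolding c_def by auto
  define v' where "v' = (\<lambda>\<tau>. complex_of_real (1 - \<eta>) * v \<tau>)"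
  have "\<forall>\<sigma>\<in>confs L d. \<exists>q\<in>QC. cmod (q - v' \<sigma>) < \<eta> / c"
    using QC_dense \<eta> c by auto
  then obtain f where f: "\<forall>\<sigma>\<in>confs L d. f \<sigma> \<in> QC \<and> cmod (f \<sigma> - v' \<sigma>) < \<eta> / c" by metis
  define w where "w = (\<lambda>\<sigma>. if \<sigma> \<in> confs L d then f \<sigma> else 0)"
  have dwv: "vnorm L d (\<lambda>\<tau>. w \<tau> - v' \<tau>) \<le> \<eta>"
  proof -
    have "vnorm L d (\<lambda>\<tau>. w \<tau> - v' \<tau>) \<le> (\<Sum>\<sigma>\<in>confs L d. cmod (w \<sigma> - v' \<sigma>))" by (rule vnorm_le_sum)
    also have "\<dots> \<le> (\<Sum>\<sigma>\<in>confs L d. \<eta> / c)" by (rule sum_mono) (use f in \<open>auto simp: w_def less_imp_le\<close>)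
    also have "\<dots> = real (card (confs L d)) * (\<eta> / c)" by simp
    also have "\<dots> \<le> c * (\<eta> / c)" using c \<eta> by (intro mult_right_mono) auto
    also have "\<dots> = \<eta>" using c by simp
    finally show ?thesis .
  qed
  have c1: "cmod (complex_of_real (1 - \<eta>)) = 1 - \<eta>" using \<eta> by (subst norm_of_real) simp
  have nv': "vnorm L d v' = (1 - \<eta>) * vnorm L d v" unfolding v'_def vnorm_scale c1 ..
  have "vnorm L d w \<le> 1"
  proof -
    have "w = (\<lambda>\<tau>. v' \<tau> + (w \<tau> - v' \<tau>))" by simp
    then have "vnorm L d w \<le> vnorm L d v' + vnorm L d (\<lambda>\<tau>. w \<tau> - v' \<tau>)" by (metis vnorm_triangle)
    also have "\<dots> \<le> (1 - \<eta>) * 1 + \<eta>" unfolding nv' using v \<eta> dwv by (intro add_mono mult_left_mono) auto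
    finally show ?thesis by simp
  qed
  then have wVQ: "w \<in> VQ L d" unfolding VQ_def w_def using f by auto
  have nAv: "vnorm L d (op_apply L d A v) \<le> l1 L d A" using op_apply_l1[OF finL, of d A v] v l1_nonneg[OF finL, of d A]
    by (metis mult_left_le order_trans)
  have "vnorm L d (op_apply L d A v) \<le> vnorm L d (op_apply L d A v') + l1 L d A * vnorm L d (\<lambda>\<tau>. v \<tau> - v' \<tau>)"
    by (rule vnorm_op_diff)
  also have "vnorm L d (\<lambda>\<tau>. v \<tau> - v' \<tau>) = \<eta> * vnorm L d v"
  proof -
    have "(\<lambda>\<tau>. v \<tau> - v' \<tau>) = (\<lambda>\<tau>. complex_of_real \<eta> * v \<tau>)" unfolding v'_def by (auto simp: algebra_simps)
    then show ?thesis using \<eta> by (simp add: vnorm_scale)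
  qed
  also have "vnorm L d (op_apply L d A v') \<le> vnorm L d (op_apply L d A w) + l1 L d A * vnorm L d (\<lambda>\<tau>. v' \<tau> - w \<tau>)"
    by (rule vnorm_op_diff)
  also have "vnorm L d (\<lambda>\<tau>. v' \<tau> - w \<tau>) = vnorm L d (\<lambda>\<tau>. w \<tau> - v' \<tau>)"
    unfolding vnorm_def by (simp add: norm_minus_commute)
  finally have "vnorm L d (op_apply L d A v) \<le> vnorm L d (op_apply L d A w) + l1 L d A * vnorm L d (\<lambda>\<tau>. w \<tau> - v' \<tau>) + l1 L d A * (\<eta> * vnorm L d v)"
    by simp
  also have "\<dots> \<le> vnorm L d (op_apply L d A w) + K * \<eta> + K * \<eta>"
    using dwv v \<eta> l1_nonneg[OF finL, of d A] vnorm_nonneg[of L d v] vnorm_nonneg[of L d "\<lambda>\<tau>. w \<tau> - v' \<tau>"]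
    unfolding K_def
    by (intro add_mono mult_mono) (auto intro: mult_le_one)
  also have "\<dots> \<le> vnorm L d (op_apply L d A w) + \<gamma>"
    using \<eta>(3) K by (simp add: field_simps)
  finally show ?thesis using wVQ by blast
qed

lemma opnorm_SUP: "opnorm L d A = (SUP v\<in>VQ L d. vnorm L d (op_apply L d A v))"
proof (rule antisym)
  have ne: "VQ L d \<noteq> {}" using zero_VQ by blast
  have bdd: "bdd_above ((\<lambda>v. vnorm L d (op_apply L d A v)) ` VQ L d)"
    by (rule bdd_aboveI[of _ "opnorm L d A"]) (auto simp: VQ_def intro!: opnorm_ge[OF finL])
  show "(SUP v\<in>VQ L d. vnorm L d (op_apply L d A v)) \<le> opnorm L d A"
    using ne by (rule cSUP_least) (auto simp: VQ_def intro!: opnorm_ge[OF finL])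
  show "opnorm L d A \<le> (SUP v\<in>VQ L d. vnorm L d (op_apply L d A v))"
  proof (rule opnorm_le[OF finL])
    fix v assume v: "vnorm L d v \<le> 1"
    show "vnorm L d (op_apply L d A v) \<le> (SUP v\<in>VQ L d. vnorm L d (op_apply L d A v))"
    proof (rule field_le_epsilon)
      fix \<gamma> :: real assume "0 < \<gamma>"
      then obtain w where "w \<in> VQ L d" "vnorm L d (op_apply L d A v) \<le> vnorm L d (op_apply L d A w) + \<gamma>"
        using VQ_approx[OF v] by blast
      moreover have "vnorm L d (op_apply L d A w) \<le> (SUP v\<in>VQ L d. vnorm L d (op_apply L d A v))"
        using \<open>w \<in> VQ L d\<close> bdd by (rule cSUP_upper)
      ultimately show "vnorm L d (op_apply L d A v) \<le> (SUP v\<in>VQ L d. vnorm L d (op_apply L d A v)) + \<gamma>" by simp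
    qed
  qed
qed

lemma vnorm_op_measurable:
  assumes "\<And>\<sigma> \<tau>. \<sigma> \<in> confs L d \<Longrightarrow> \<tau> \<in> confs L d \<Longrightarrow> (\<lambda>s. A s \<sigma> \<tau>) \<in> borel_measurable M"
  shows "(\<lambda>s. vnorm L d (op_apply L d (A s) v)) \<in> borel_measurable M"
  unfolding vnorm_def op_apply_def
  by (intro borel_measurable_sum measurable_compose[OF _ borel_measurable_sqrt] measurable_compose[OF _ borel_measurable_norm]
      borel_measurable_power borel_measurable_times borel_measurable_const assms)

lemma opnorm_measurable:
  assumes "\<And>\<sigma> \<tau>. \<sigma> \<in> confs L d \<Longrightarrow> \<tau> \<in> confs L d \<Longrightarrow> (\<lambda>s. A s \<sigma> \<tau>) \<in> borel_measurable M"
  shows "(\<lambda>s. opnorm L d (A s)) \<in> borel_measurable M"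
proof -
  have "(\<lambda>s. SUP v\<in>VQ L d. vnorm L d (op_apply L d (A s) v)) \<in> borel_measurable M"
  proof (rule borel_measurable_cSUP)
    show "countable (VQ L d)" by (rule countable_VQ)
    show "(\<lambda>s. vnorm L d (op_apply L d (A s) v)) \<in> borel_measurable M" for v by (rule vnorm_op_measurable[OF assms])
    show "bdd_above ((\<lambda>v. vnorm L d (op_apply L d (A s) v)) ` VQ L d)" for s
      by (rule bdd_aboveI[of _ "opnorm L d (A s)"]) (auto simp: VQ_def intro!: opnorm_ge[OF finL])
  qed
  then show ?thesis by (simp add: opnorm_SUP[symmetric])
qed

end

definition mb :: "real \<Rightarrow> (real \<Rightarrow> 'b::euclidean_space) \<Rightarrow> bool" where
  "mb t h \<longleftrightarrow> h \<in> borel_measurable (lebesgue_on {0..t}) \<and> (\<exists>B. \<forall>s\<in>{0..t}. norm (h s) \<le> B)"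

lemma mb_integrable: "mb t h \<Longrightarrow> h integrable_on {0..t}"
  unfolding mb_def
proof (elim conjE exE)
  fix B assume m: "h \<in> borel_measurable (lebesgue_on {0..t})" and B: "\<forall>s\<in>{0..t}. norm (h s) \<le> B"
  show "h integrable_on {0..t}"
    by (rule measurable_bounded_by_integrable_imp_integrable[OF m, of "\<lambda>_. B"]) (use B in auto)
qed

lemma mb_integrable_sub: "mb t h \<Longrightarrow> u \<le> t \<Longrightarrow> 0 \<le> u \<Longrightarrow> h integrable_on {0..u}"
  by (rule integrable_on_subinterval[OF mb_integrable]) auto

lemma mb_const: "mb t (\<lambda>_. c)" unfolding mb_def by auto

lemma mb_cont: "continuous_on {0..t} h \<Longrightarrow> mb t h"
  unfolding mb_def
proof
  assume c: "continuous_on {0..t} h"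
  show "h \<in> borel_measurable (lebesgue_on {0..t})" by (rule continuous_imp_measurable_on_sets_lebesgue[OF c]) auto
  have "compact (h ` {0..t})" by (rule compact_continuous_image[OF c]) auto
  then have "bounded (h ` {0..t})" by (rule compact_imp_bounded)
  then show "\<exists>B. \<forall>s\<in>{0..t}. norm (h s) \<le> B" unfolding bounded_iff by auto
qed

lemma mb_add: "mb t f \<Longrightarrow> mb t g \<Longrightarrow> mb t (\<lambda>s. f s + g s)"
  unfolding mb_def
proof (elim conjE exE, intro conjI)
  fix B1 B2 assume "\<forall>s\<in>{0..t}. norm (f s) \<le> B1" "\<forall>s\<in>{0..t}. norm (g s) \<le> B2"
  then show "\<exists>B. \<forall>s\<in>{0..t}. norm (f s + g s) \<le> B"
    by (intro exI[of _ "B1 + B2"]) (metis add_mono norm_triangle_ineq order_trans)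
qed auto

lemma mb_diff: "mb t f \<Longrightarrow> mb t g \<Longrightarrow> mb t (\<lambda>s. f s - g s)"
  unfolding mb_def
proof (elim conjE exE, intro conjI)
  fix B1 B2 assume "\<forall>s\<in>{0..t}. norm (f s) \<le> B1" "\<forall>s\<in>{0..t}. norm (g s) \<le> B2"
  then show "\<exists>B. \<forall>s\<in>{0..t}. norm (f s - g s) \<le> B"
    by (intro exI[of _ "B1 + B2"]) (metis add_mono norm_triangle_ineq4 order_trans)
qed auto

lemma mb_mult:
  fixes f g :: "real \<Rightarrow> 'b::{euclidean_space, real_normed_algebra}"
  shows "mb t f \<Longrightarrow> mb t g \<Longrightarrow> mb t (\<lambda>s. f s * g s)"
  unfolding mb_def
proof (elim conjE exE, intro conjI)
  fix B1 B2 assume b1: "\<forall>s\<in>{0..t}. norm (f s) \<le> B1" and b2: "\<forall>s\<in>{0..t}. norm (g s) \<le> B2"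
  show "\<exists>B. \<forall>s\<in>{0..t}. norm (f s * g s) \<le> B"
  proof (intro exI ballI)
    fix s assume s: "s \<in> {0..t}"
    have "norm (f s * g s) \<le> norm (f s) * norm (g s)" by (rule norm_mult_ineq)
    also have "\<dots> \<le> B1 * B2" using b1 b2 s by (intro mult_mono) (auto intro: order_trans[OF norm_ge_zero])
    finally show "norm (f s * g s) \<le> B1 * B2" .
  qed
qed auto

lemma mb_sum: "finite I \<Longrightarrow> (\<And>i. i \<in> I \<Longrightarrow> mb t (f i)) \<Longrightarrow> mb t (\<lambda>s. \<Sum>i\<in>I. f i s)"
proof (induction I rule: finite_induct)
  case empty then show ?case by (simp add: mb_const)
next
  case (insert x F) then show ?case by (simp add: mb_add)
qed

lemma mb_measurable: "mb t h \<Longrightarrow> h \<in> borel_measurable (lebesgue_on {0..t})" unfolding mb_def by auto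

lemma mb_of_real: "mb t f \<Longrightarrow> mb t (\<lambda>s. complex_of_real (f s))"
  unfolding mb_def by (auto intro: measurable_compose[OF _ borel_measurable_of_real])

lemma mb_cmod: "mb t f \<Longrightarrow> mb t (\<lambda>s. cmod (f s))"
  unfolding mb_def by (auto intro: measurable_compose[OF _ borel_measurable_norm])

lemma mb_max: "mb t f \<Longrightarrow> mb t g \<Longrightarrow> mb t (\<lambda>s. max (f s) (g s) :: real)"
  unfolding mb_def
proof (elim conjE exE, intro conjI)
  fix B1 B2 assume "\<forall>s\<in>{0..t}. norm (f s) \<le> B1" "\<forall>s\<in>{0..t}. norm (g s) \<le> B2"
  moreover have "norm (max (f s) (g s)) \<le> norm (f s) + norm (g s)" for s by (auto simp: max_def)
  ultimately show "\<exists>B. \<forall>s\<in>{0..t}. norm (max (f s) (g s)) \<le> B"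
    by (intro exI[of _ "B1 + B2"]) (meson add_mono order_trans)
qed auto

context
  fixes L :: "'a set" and d :: "'a \<Rightarrow> nat"
  assumes finL: "finite L"
begin

lemma mb_opnorm:
  assumes "\<And>\<sigma> \<tau>. \<sigma> \<in> confs L d \<Longrightarrow> \<tau> \<in> confs L d \<Longrightarrow> mb t (\<lambda>s. A s \<sigma> \<tau>)"
  shows "mb t (\<lambda>s. opnorm L d (A s))"
  unfolding mb_def
proof
  show "(\<lambda>s. opnorm L d (A s)) \<in> borel_measurable (lebesgue_on {0..t})"
    by (rule opnorm_measurable[OF finL]) (use assms in \<open>auto simp: mb_def\<close>)
  have "mb t (\<lambda>s. l1 L d (A s))" unfolding l1_def
    by (intro mb_sum finCF[OF finL] mb_cmod assms)
  then obtain B where B: "\<forall>s\<in>{0..t}. norm (l1 L d (A s)) \<le> B" unfolding mb_def by auto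
  show "\<exists>B. \<forall>s\<in>{0..t}. norm (opnorm L d (A s)) \<le> B"
  proof (intro exI ballI)
    fix s assume "s \<in> {0..t}"
    then show "norm (opnorm L d (A s)) \<le> B" using B[rule_format, OF \<open>s \<in> {0..t}\<close>] opnorm_le_l1[OF finL, of d "A s"] opnorm_nonneg[OF finL, of d "A s"]
      by auto
  qed
qed

lemma mb_psum:
  assumes "\<And>Z \<sigma> \<tau>. Z \<subseteq> L \<Longrightarrow> \<sigma> \<in> confs L d \<Longrightarrow> \<tau> \<in> confs L d \<Longrightarrow> mb t (\<lambda>s. Q s Z \<sigma> \<tau>)"
  shows "mb t (\<lambda>s. psum L d \<kappa> (Q s) x)"
  unfolding psum_def
  by (intro mb_sum finZx[OF finL] mb_mult mb_const mb_opnorm assms) auto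

lemma mb_pot_norm:
  assumes "\<And>Z \<sigma> \<tau>. Z \<subseteq> L \<Longrightarrow> \<sigma> \<in> confs L d \<Longrightarrow> \<tau> \<in> confs L d \<Longrightarrow> mb t (\<lambda>s. Q s Z \<sigma> \<tau>)"
  shows "mb t (\<lambda>s. pot_norm L d \<kappa> (Q s))"
proof (cases "L = {}")
  case True
  then show ?thesis unfolding pot_norm_psum by (simp add: mb_const)
next
  case False
  have "pot_norm L d \<kappa> (Q s) = max 0 (Max ((\<lambda>x. psum L d \<kappa> (Q s) x) ` L))" for s
    unfolding pot_norm_psum using False finL by (simp add: Max_insert)
  moreover have "mb t (\<lambda>s. max 0 (Max ((\<lambda>x. psum L d \<kappa> (Q s) x) ` L)))"
  proof (rule mb_max[OF mb_const])
    have m: "(\<lambda>s. Max ((\<lambda>x. psum L d \<kappa> (Q s) x) ` L)) \<in> borel_measurable (lebesgue_on {0..t})"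
      by (rule borel_measurable_Max[OF finL]) (rule mb_measurable[OF mb_psum[OF assms]])
    have "mb t (\<lambda>s. psum L d \<kappa> (Q s) x)" for x by (rule mb_psum[OF assms])
    then have "\<exists>B. \<forall>s\<in>{0..t}. norm (psum L d \<kappa> (Q s) x) \<le> B" for x
      unfolding mb_def by auto
    then obtain B where B: "\<forall>x. \<forall>s\<in>{0..t}. norm (psum L d \<kappa> (Q s) x) \<le> B x" by metis
    show "mb t (\<lambda>s. Max ((\<lambda>x. psum L d \<kappa> (Q s) x) ` L))"
      unfolding mb_def
    proof (intro conjI m exI ballI)
      fix s assume s: "s \<in> {0..t}"
      have "Max ((\<lambda>x. psum L d \<kappa> (Q s) x) ` L) \<in> (\<lambda>x. psum L d \<kappa> (Q s) x) ` L"
        by (rule Max_in) (use finL False in auto)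
      then obtain x where x: "x \<in> L" "Max ((\<lambda>x. psum L d \<kappa> (Q s) x) ` L) = psum L d \<kappa> (Q s) x"
        by auto
      have "norm (psum L d \<kappa> (Q s) x) \<le> (\<Sum>y\<in>L. \<bar>B y\<bar>)"
      proof -
        have "norm (psum L d \<kappa> (Q s) x) \<le> B x" using B s by blast
        also have "B x \<le> \<bar>B x\<bar>" by simp
        also have "\<dots> \<le> (\<Sum>y\<in>L. \<bar>B y\<bar>)" by (rule member_le_sum) (use x(1) finL in auto)
        finally show ?thesis .
      qed
      then show "norm (Max ((\<lambda>x. psum L d \<kappa> (Q s) x) ` L)) \<le> (\<Sum>y\<in>L. \<bar>B y\<bar>)" using x by simp
    qed
  qed
  ultimately show ?thesis by simp
qed

lemma opnorm_integral:
  assumes A: "\<And>\<sigma> \<tau>. \<sigma> \<in> confs L d \<Longrightarrow> \<tau> \<in> confs L d \<Longrightarrow> mb t (\<lambda>s. A s \<sigma> \<tau>)"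
    and u: "0 \<le> u" "u \<le> t"
  shows "opnorm L d (\<lambda>\<sigma> \<tau>. integral {0..u} (\<lambda>s. A s \<sigma> \<tau>)) \<le> integral {0..u} (\<lambda>s. opnorm L d (A s))"
proof (rule opnorm_le[OF finL])
  have intA: "(\<lambda>s. A s \<sigma> \<tau>) integrable_on {0..u}" if "\<sigma> \<in> confs L d" "\<tau> \<in> confs L d" for \<sigma> \<tau>
    using mb_integrable_sub[OF A[OF that] u(2) u(1)] .
  have intN: "(\<lambda>s. opnorm L d (A s)) integrable_on {0..u}"
    using mb_integrable_sub[OF mb_opnorm[OF A] u(2) u(1)] .
  have c0: "0 \<le> integral {0..u} (\<lambda>s. opnorm L d (A s))"
    by (rule integral_nonneg[OF intN]) (simp add: opnorm_nonneg[OF finL])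
  fix v assume v: "vnorm L d v \<le> 1"
  define y where "y = op_apply L d (\<lambda>\<sigma> \<tau>. integral {0..u} (\<lambda>s. A s \<sigma> \<tau>)) v"
  define h where "h s = op_apply L d (A s) v" for s
  have inth: "(\<lambda>s. h s \<sigma>) integrable_on {0..u}" if "\<sigma> \<in> confs L d" for \<sigma>
    unfolding h_def op_apply_def
    by (intro integrable_sum finCF[OF finL] integrable_on_mult_left intA that)
  have y: "y \<sigma> = integral {0..u} (\<lambda>s. h s \<sigma>)" if "\<sigma> \<in> confs L d" for \<sigma>
    unfolding y_def h_def op_apply_def
    by (subst Henstock_Kurzweil_Integration.integral_sum) (auto intro!: finCF[OF finL] integrable_on_mult_left intA that)
  have "(vnorm L d y)^2 = cmod (\<Sum>\<sigma>\<in>confs L d. cnj (y \<sigma>) * y \<sigma>)"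
    by (simp add: vnorm_self norm_power)
  also have "(\<Sum>\<sigma>\<in>confs L d. cnj (y \<sigma>) * y \<sigma>) = integral {0..u} (\<lambda>s. \<Sum>\<sigma>\<in>confs L d. cnj (y \<sigma>) * h s \<sigma>)"
    by (subst Henstock_Kurzweil_Integration.integral_sum)
       (auto intro!: finCF[OF finL] integrable_on_mult_right inth sum.cong simp: y)
  also have "cmod \<dots> \<le> integral {0..u} (\<lambda>s. vnorm L d y * opnorm L d (A s))"
  proof (rule integral_norm_bound_integral)
    show "(\<lambda>s. \<Sum>\<sigma>\<in>confs L d. cnj (y \<sigma>) * h s \<sigma>) integrable_on {0..u}"
      by (intro integrable_sum finCF[OF finL] integrable_on_mult_right inth)
    show "(\<lambda>s. vnorm L d y * opnorm L d (A s)) integrable_on {0..u}"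
      by (intro integrable_on_mult_right intN)
    fix s assume "s \<in> {0..u}"
    have "cmod (\<Sum>\<sigma>\<in>confs L d. cnj (y \<sigma>) * h s \<sigma>) \<le> vnorm L d y * vnorm L d (h s)" by (rule vnorm_cs)
    also have "\<dots> \<le> vnorm L d y * (opnorm L d (A s) * vnorm L d v)"
      unfolding h_def by (intro mult_left_mono opnorm_bound[OF finL] vnorm_nonneg)
    also have "\<dots> \<le> vnorm L d y * opnorm L d (A s)"
      using v by (intro mult_left_mono vnorm_nonneg) (auto intro: mult_left_le opnorm_nonneg[OF finL] vnorm_nonneg)
    finally show "norm (\<Sum>\<sigma>\<in>confs L d. cnj (y \<sigma>) * h s \<sigma>) \<le> vnorm L d y * opnorm L d (A s)" by simp
  qed
  also have "\<dots> = vnorm L d y * integral {0..u} (\<lambda>s. opnorm L d (A s))" by simp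
  finally have "(vnorm L d y)^2 \<le> vnorm L d y * integral {0..u} (\<lambda>s. opnorm L d (A s))" .
  then show "vnorm L d (op_apply L d (\<lambda>\<sigma> \<tau>. integral {0..u} (\<lambda>s. A s \<sigma> \<tau>)) v) \<le> integral {0..u} (\<lambda>s. opnorm L d (A s))"
    unfolding y_def[symmetric] using vnorm_nonneg[of L d y] c0
    by (cases "vnorm L d y = 0") (auto simp: power2_eq_square mult_le_cancel_left)
qed

lemma pot_norm_integral:
  assumes Q: "\<And>Z \<sigma> \<tau>. Z \<subseteq> L \<Longrightarrow> \<sigma> \<in> confs L d \<Longrightarrow> \<tau> \<in> confs L d \<Longrightarrow> mb t (\<lambda>s. Q s Z \<sigma> \<tau>)"
    and u: "0 \<le> u" "u \<le> t"
  shows "pot_norm L d \<kappa> (\<lambda>Z \<sigma> \<tau>. integral {0..u} (\<lambda>s. Q s Z \<sigma> \<tau>)) \<le> integral {0..u} (\<lambda>s. pot_norm L d \<kappa> (Q s))"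
proof (rule pot_norm_le[OF finL])
  have intP: "(\<lambda>s. pot_norm L d \<kappa> (Q s)) integrable_on {0..u}"
    by (rule mb_integrable_sub[OF mb_pot_norm[OF Q] u(2) u(1)])
  show "0 \<le> integral {0..u} (\<lambda>s. pot_norm L d \<kappa> (Q s))"
    by (rule integral_nonneg[OF intP]) (simp add: pot_norm_nonneg[OF finL])
  fix x assume x: "x \<in> L"
  have intO: "(\<lambda>s. opnorm L d (Q s Z)) integrable_on {0..u}" if "Z \<subseteq> L" for Z
    by (rule mb_integrable_sub[OF mb_opnorm u(2) u(1)]) (use Q that in auto)
  have "psum L d \<kappa> (\<lambda>Z \<sigma> \<tau>. integral {0..u} (\<lambda>s. Q s Z \<sigma> \<tau>)) x
     \<le> (\<Sum>Z\<in>{Z. Z \<subseteq> L \<and> x \<in> Z}. exp (\<kappa> * real (card Z)) * integral {0..u} (\<lambda>s. opnorm L d (Q s Z)))"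
    unfolding psum_def
    by (rule sum_mono) (auto intro!: mult_left_mono opnorm_integral[OF _ u] Q)
  also have "\<dots> = integral {0..u} (\<lambda>s. psum L d \<kappa> (Q s) x)"
    unfolding psum_def
    by (subst Henstock_Kurzweil_Integration.integral_sum) (auto intro!: finZx[OF finL] integrable_on_mult_right intO)
  also have "\<dots> \<le> integral {0..u} (\<lambda>s. pot_norm L d \<kappa> (Q s))"
    by (rule integral_le[OF mb_integrable_sub[OF mb_psum[OF Q] u(2) u(1)] intP])
       (use x in \<open>auto intro: psum_le_pot_norm[OF finL]\<close>)
  finally show "psum L d \<kappa> (\<lambda>Z \<sigma> \<tau>. integral {0..u} (\<lambda>s. Q s Z \<sigma> \<tau>)) x \<le> integral {0..u} (\<lambda>s. pot_norm L d \<kappa> (Q s))" .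
qed

end

lemma pow_convex:
  fixes p q :: real
  assumes "0 \<le> p" "p \<le> q"
  shows "real (Suc m) * p ^ m * (q - p) \<le> q ^ Suc m - p ^ Suc m"
proof -
  have "q ^ Suc m - p ^ Suc m = (q - p) * (\<Sum>i<Suc m. p ^ (Suc m - Suc i) * q ^ i)" by (rule power_diff_sumr2)
  also have "(\<Sum>i<Suc m. p ^ (Suc m - Suc i) * q ^ i) \<ge> (\<Sum>i<Suc m. p ^ m)"
  proof (rule sum_mono)
    fix i assume "i \<in> {..<Suc m}"
    then have "p ^ m = p ^ (Suc m - Suc i) * p ^ i" by (simp add: power_add[symmetric])
    also have "\<dots> \<le> p ^ (Suc m - Suc i) * q ^ i" using assms by (intro mult_left_mono power_mono) auto
    finally show "p ^ m \<le> p ^ (Suc m - Suc i) * q ^ i" .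
  qed
  then have "(q - p) * (\<Sum>i<Suc m. p ^ m) \<le> (q - p) * (\<Sum>i<Suc m. p ^ (Suc m - Suc i) * q ^ i)"
    using assms by (intro mult_left_mono) auto
  finally show ?thesis by (simp add: ac_simps)
qed

lemma integral_partition:
  fixes h :: "real \<Rightarrow> real"
  assumes h: "h integrable_on {0..u}" and u: "0 \<le> u" and N: "0 < N"
  shows "integral {0..u} h = (\<Sum>i<N. integral {real i * u / real N .. real (Suc i) * u / real N} h)"
proof -
  have "n \<le> N \<Longrightarrow> integral {0..real n * u / real N} h = (\<Sum>i<n. integral {real i * u / real N .. real (Suc i) * u / real N} h)" for n
  proof (induction n)
    case 0 then show ?case by simp
  next
    case (Suc n)
    have le: "real n * u / real N \<le> real (Suc n) * u / real N" using u N by (simp add: divide_right_mono mult_right_mono)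
    have "real (Suc n) * u / real N \<le> real N * u / real N"
      using Suc.prems u N by (intro divide_right_mono mult_right_mono) auto
    then have le2: "real (Suc n) * u / real N \<le> u" using N by simp
    have int: "h integrable_on {0..real (Suc n) * u / real N}"
      by (rule integrable_on_subinterval[OF h]) (use le2 in auto)
    have "integral {0..real (Suc n) * u / real N} h = integral {0..real n * u / real N} h + integral {real n * u / real N..real (Suc n) * u / real N} h"
      by (rule Henstock_Kurzweil_Integration.integral_combine[symmetric, OF _ le int]) (use u N in auto)
    then show ?case using Suc by simp
  qed
  from this[of N] show ?thesis using N by simp
qed

lemma ftc_bound:
  fixes f :: "real \<Rightarrow> real"
  assumes mbf: "mb t f" and f0: "\<And>s. s \<in> {0..t} \<Longrightarrow> 0 \<le> f s" and a: "0 \<le> a"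
    and u: "0 \<le> u" "u \<le> t"
  shows "integral {0..u} (\<lambda>s. f s * (a + integral {0..s} f) ^ m) \<le> ((a + integral {0..u} f) ^ Suc m - a ^ Suc m) / real (Suc m)"
proof -
  define F where "F s = integral {0..s} f" for s
  have intf: "f integrable_on {0..t}" by (rule mb_integrable[OF mbf])
  have intsub: "f integrable_on {x..y}" if "0 \<le> x" "y \<le> t" for x y
    by (rule integrable_on_subinterval[OF intf]) (use that in auto)
  have Fdiff: "F y - F x = integral {x..y} f" if "0 \<le> x" "x \<le> y" "y \<le> t" for x y
    using Henstock_Kurzweil_Integration.integral_combine[OF that(1,2) intsub[OF order_refl that(3)]] unfolding F_def by simp
  have Fmono: "F x \<le> F y" if "0 \<le> x" "x \<le> y" "y \<le> t" for x y
    using Fdiff[OF that] integral_nonneg[OF intsub[OF that(1) that(3)], of] f0 that by force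
  have F0: "F 0 = 0" unfolding F_def by simp
  have Fnn: "0 \<le> F x" if "0 \<le> x" "x \<le> t" for x using Fmono[of 0 x] that F0 by simp
  obtain B where B: "\<forall>s\<in>{0..t}. norm (f s) \<le> B" using mbf unfolding mb_def by auto
  have fB: "f s \<le> B" if "s \<in> {0..t}" for s using B that by force
  have contF: "continuous_on {0..t} F" unfolding F_def by (rule indefinite_integral_continuous_1[OF intf])
  have mbg: "mb t (\<lambda>s. f s * (a + F s) ^ m)"
    by (intro mb_mult mbf) (simp add: mb_cont continuous_intros contF)
  have intg: "(\<lambda>s. f s * (a + F s) ^ m) integrable_on {x..y}" if "0 \<le> x" "y \<le> t" for x y
    by (rule integrable_on_subinterval[OF mb_integrable[OF mbg]]) (use that in auto)
  define target where "target = ((a + F u) ^ Suc m - a ^ Suc m) / real (Suc m)"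
  define K where "K = (a + F u) ^ m - a ^ m"
  have K0: "0 \<le> K" unfolding K_def using Fnn[of u] u a by (auto intro: power_mono)
  have main: "integral {0..u} (\<lambda>s. f s * (a + F s) ^ m) \<le> target + B * u / real N * K" if N: "0 < N" for N
  proof -
    define x where "x i = real i * u / real N" for i
    have x_mono: "x i \<le> x (Suc i)" for i unfolding x_def using u N by (simp add: divide_right_mono mult_right_mono)
    have x0: "0 \<le> x i" for i unfolding x_def using u by simp
    have xle: "x i \<le> t" if "i \<le> N" for i
    proof -
      have "real i * u / real N \<le> real N * u / real N"
        using that u N by (intro divide_right_mono mult_right_mono) auto
      then have "x i \<le> u" unfolding x_def using N by simp
      then show ?thesis using u by simp
    qed
    have xN: "x N = u" unfolding x_def using N by simp
    have "integral {0..u} (\<lambda>s. f s * (a + F s) ^ m) = (\<Sum>i<N. integral {x i..x (Suc i)} (\<lambda>s. f s * (a + F s) ^ m))"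
      unfolding x_def by (rule integral_partition[OF intg[OF order_refl u(2)] u(1) N])
    also have "\<dots> \<le> (\<Sum>i<N. (a + F (x (Suc i))) ^ m * (F (x (Suc i)) - F (x i)))"
    proof (rule sum_mono)
      fix i assume i: "i \<in> {..<N}"
      have xs: "x (Suc i) \<le> t" using xle[of "Suc i"] i by simp
      have "integral {x i..x (Suc i)} (\<lambda>s. f s * (a + F s) ^ m) \<le> integral {x i..x (Suc i)} (\<lambda>s. f s * (a + F (x (Suc i))) ^ m)"
      proof (rule integral_le)
        show "(\<lambda>s. f s * (a + F s) ^ m) integrable_on {x i..x (Suc i)}" by (rule intg[OF x0 xs])
        show "(\<lambda>s. f s * (a + F (x (Suc i))) ^ m) integrable_on {x i..x (Suc i)}"
          by (rule integrable_on_mult_left[OF intsub[OF x0 xs]])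
        fix s assume s: "s \<in> {x i..x (Suc i)}"
        have s0: "0 \<le> s" "s \<le> t" using s x0[of i] xs by auto
        show "f s * (a + F s) ^ m \<le> f s * (a + F (x (Suc i))) ^ m"
          using s s0 xs Fnn[OF s0] a by (intro mult_left_mono power_mono add_left_mono Fmono f0) auto
      qed
      also have "\<dots> = (a + F (x (Suc i))) ^ m * (F (x (Suc i)) - F (x i))"
        using Fdiff[OF x0 x_mono xs] by (simp add: mult.commute)
      finally show "integral {x i..x (Suc i)} (\<lambda>s. f s * (a + F s) ^ m) \<le> (a + F (x (Suc i))) ^ m * (F (x (Suc i)) - F (x i))" .
    qed
    also have "\<dots> \<le> (\<Sum>i<N. ((a + F (x (Suc i))) ^ Suc m - (a + F (x i)) ^ Suc m) / real (Suc m)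
                  + ((a + F (x (Suc i))) ^ m - (a + F (x i)) ^ m) * (B * u / real N))"
    proof (rule sum_mono)
      fix i assume i: "i \<in> {..<N}"
      have xs: "x (Suc i) \<le> t" using xle[of "Suc i"] i by simp
      have xi: "x i \<le> t" using xle[of i] i by simp
      let ?p = "a + F (x i)" and ?q = "a + F (x (Suc i))"
      have p0: "0 \<le> ?p" using Fnn[OF x0 xi] a by simp
      have pq: "?p \<le> ?q" using Fmono[OF x0 x_mono xs] by simp
      have conv: "real (Suc m) * ?p ^ m * (?q - ?p) \<le> ?q ^ Suc m - ?p ^ Suc m" by (rule pow_convex[OF p0 pq])
      have d: "F (x (Suc i)) - F (x i) \<le> B * u / real N"
      proof -
        have "F (x (Suc i)) - F (x i) = integral {x i..x (Suc i)} f" by (rule Fdiff[OF x0 x_mono xs])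
        also have "\<dots> \<le> integral {x i..x (Suc i)} (\<lambda>_. B)"
          by (rule integral_le[OF intsub[OF x0 xs]]) (use x0[of i] xs in \<open>auto intro!: fB\<close>)
        also have "\<dots> = B * u / real N" using x_mono[of i] N unfolding x_def by (simp add: field_simps)
        finally show ?thesis .
      qed
      have "?q ^ m * (?q - ?p) = ?p ^ m * (?q - ?p) + (?q ^ m - ?p ^ m) * (?q - ?p)" by (simp add: algebra_simps)
      also have "\<dots> \<le> (?q ^ Suc m - ?p ^ Suc m) / real (Suc m) + (?q ^ m - ?p ^ m) * (B * u / real N)"
      proof (rule add_mono)
        show "?p ^ m * (?q - ?p) \<le> (?q ^ Suc m - ?p ^ Suc m) / real (Suc m)"
          using conv by (simp add: field_simps)
        show "(?q ^ m - ?p ^ m) * (?q - ?p) \<le> (?q ^ m - ?p ^ m) * (B * u / real N)"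
          using d pq p0 by (intro mult_left_mono) (auto intro: power_mono)
      qed
      finally show "?q ^ m * (F (x (Suc i)) - F (x i)) \<le> (?q ^ Suc m - ?p ^ Suc m) / real (Suc m) + (?q ^ m - ?p ^ m) * (B * u / real N)"
        by simp
    qed
    also have "\<dots> = target + B * u / real N * K"
    proof -
      have t1: "(\<Sum>i<N. ((a + F (x (Suc i))) ^ Suc m - (a + F (x i)) ^ Suc m)) = (a + F u) ^ Suc m - a ^ Suc m"
        using sum_lessThan_telescope[of "\<lambda>i. (a + F (x i)) ^ Suc m" N] xN F0 by (simp add: x_def)
      have t2: "(\<Sum>i<N. ((a + F (x (Suc i))) ^ m - (a + F (x i)) ^ m)) = K"
        using sum_lessThan_telescope[of "\<lambda>i. (a + F (x i)) ^ m" N] xN F0 unfolding K_def by (simp add: x_def)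
      let ?X = "\<lambda>i. (a + F (x (Suc i))) ^ Suc m - (a + F (x i)) ^ Suc m"
      let ?Y = "\<lambda>i. (a + F (x (Suc i))) ^ m - (a + F (x i)) ^ m"
      have "(\<Sum>i<N. ?X i / real (Suc m) + ?Y i * (B * u / real N)) = (\<Sum>i<N. ?X i) / real (Suc m) + (\<Sum>i<N. ?Y i) * (B * u / real N)"
        by (simp only: sum.distrib sum_divide_distrib sum_distrib_right)
      then show ?thesis unfolding target_def using t1 t2 by (simp add: ac_simps)
    qed
    finally show ?thesis .
  qed
  have "integral {0..u} (\<lambda>s. f s * (a + F s) ^ m) \<le> target"
  proof (rule field_le_epsilon)
    fix \<gamma> :: real assume g: "0 < \<gamma>"
    obtain N :: nat where N: "\<bar>B\<bar> * u * K / \<gamma> < real N" using reals_Archimedean2 by blast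
    have "0 \<le> \<bar>B\<bar> * u * K / \<gamma>" using g K0 u by simp
    then have N0: "0 < N" using N by (cases N) auto
    have "B * (u * K) \<le> \<bar>B\<bar> * (u * K)" using u K0 by (intro mult_right_mono) auto
    then have "B * u / real N * K \<le> \<bar>B\<bar> * u * K / real N" using N0 by (simp add: field_simps)
    also have "\<dots> \<le> \<gamma>" using N N0 g by (simp add: field_simps)
    finally show "integral {0..u} (\<lambda>s. f s * (a + F s) ^ m) \<le> target + \<gamma>" using main[OF N0] by simp
  qed
  then show ?thesis unfolding target_def F_def .
qed


lemma pot_ad_entry:
  "pot_ad L d P Q Z \<sigma> \<tau> = (\<Sum>p\<in>{(Z1, Z2). Z1 \<union> Z2 = Z \<and> Z1 \<inter> Z2 \<noteq> {}}.
      (\<Sum>\<rho>\<in>confs L d. P (fst p) \<sigma> \<rho> * Q (snd p) \<rho> \<tau>) - (\<Sum>\<rho>\<in>confs L d. Q (snd p) \<sigma> \<rho> * P (fst p) \<rho> \<tau>))"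
  unfolding pot_ad_def sum_fun_apply op_comm_def op_mult_def by (simp add: case_prod_unfold)

lemma pot_ad_bilin:
  "pot_ad L d P Q Z \<sigma> \<tau> - pot_ad L d P' Q' Z \<sigma> \<tau> = pot_ad L d (P - P') Q Z \<sigma> \<tau> + pot_ad L d P' (Q - Q') Z \<sigma> \<tau>"
  unfolding pot_ad_entry minus_apply
  by (simp add: sum_subtractf[symmetric] sum.distrib[symmetric] algebra_simps)

lemma pot_ad_zero_right: "pot_ad L d P (\<lambda>_ _ _. 0) = (\<lambda>_ _ _. 0)"
  by (auto simp: fun_eq_iff pot_ad_entry)

definition mbpot :: "'a set \<Rightarrow> ('a \<Rightarrow> nat) \<Rightarrow> real \<Rightarrow> (real \<Rightarrow> 'a pot) \<Rightarrow> bool" where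
  "mbpot L d t Q \<longleftrightarrow> (\<forall>Z \<sigma> \<tau>. Z \<subseteq> L \<longrightarrow> \<sigma> \<in> confs L d \<longrightarrow> \<tau> \<in> confs L d \<longrightarrow> mb t (\<lambda>s. Q s Z \<sigma> \<tau>))"

lemma mbpotD: "mbpot L d t Q \<Longrightarrow> Z \<subseteq> L \<Longrightarrow> \<sigma> \<in> confs L d \<Longrightarrow> \<tau> \<in> confs L d \<Longrightarrow> mb t (\<lambda>s. Q s Z \<sigma> \<tau>)"
  unfolding mbpot_def by auto

lemma mbpot_diff: "mbpot L d t P \<Longrightarrow> mbpot L d t Q \<Longrightarrow> mbpot L d t (\<lambda>s. P s - Q s)"
  unfolding mbpot_def by (auto intro: mb_diff)

lemma mbpot_add: "mbpot L d t P \<Longrightarrow> mbpot L d t Q \<Longrightarrow> mbpot L d t (\<lambda>s. P s + Q s)"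
  unfolding mbpot_def by (auto intro: mb_add)

lemma regular_mbpot: "regular_tpot L d t \<Psi> \<Longrightarrow> mbpot L d t \<Psi>"
  unfolding regular_tpot_def mbpot_def mb_def bounded_iff by auto

context
  fixes L :: "'a set" and d :: "'a \<Rightarrow> nat"
  assumes finL: "finite L"
begin

lemma mbpot_pot_ad:
  assumes P: "mbpot L d t P" and Q: "mbpot L d t Q"
  shows "mbpot L d t (\<lambda>s. pot_ad L d (P s) (Q s))"
  unfolding mbpot_def
proof (intro allI impI)
  fix Z \<sigma> \<tau> assume Z: "Z \<subseteq> L" and \<sigma>: "\<sigma> \<in> confs L d" and \<tau>: "\<tau> \<in> confs L d"
  have fZ: "finite Z" using Z finL finite_subset by blast
  have fin: "finite {(Z1, Z2). Z1 \<union> Z2 = Z \<and> Z1 \<inter> Z2 \<noteq> {}}"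
    by (rule finite_subset[of _ "Pow Z \<times> Pow Z"]) (use fZ in auto)
  show "mb t (\<lambda>s. pot_ad L d (P s) (Q s) Z \<sigma> \<tau>)"
    unfolding pot_ad_entry
  proof (intro mb_sum fin mb_diff finCF[OF finL] mb_mult)
    fix p \<rho> assume p: "p \<in> {(Z1, Z2). Z1 \<union> Z2 = Z \<and> Z1 \<inter> Z2 \<noteq> {}}" and \<rho>: "\<rho> \<in> confs L d"
    have p1: "fst p \<subseteq> L" and p2: "snd p \<subseteq> L" using p Z by auto
    show "mb t (\<lambda>s. P s (fst p) \<sigma> \<rho>)" "mb t (\<lambda>s. Q s (snd p) \<rho> \<tau>)"
         "mb t (\<lambda>s. Q s (snd p) \<sigma> \<rho>)" "mb t (\<lambda>s. P s (fst p) \<rho> \<tau>)"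
      using mbpotD[OF P p1] mbpotD[OF Q p2] \<sigma> \<tau> \<rho> by auto
  qed
qed

lemma dyson_cont:
  assumes "mbpot L d t \<Psi>"
  shows "Z \<subseteq> L \<Longrightarrow> \<sigma> \<in> confs L d \<Longrightarrow> \<tau> \<in> confs L d \<Longrightarrow> continuous_on {0..t} (\<lambda>s. dyson_term L d \<Psi> \<Theta> n s Z \<sigma> \<tau>)"
proof (induction n arbitrary: Z \<sigma> \<tau>)
  case 0 then show ?case by simp
next
  case (Suc n)
  have "mbpot L d t (\<lambda>s. dyson_term L d \<Psi> \<Theta> n s)"
    unfolding mbpot_def using Suc.IH by (auto intro: mb_cont)
  then have "mbpot L d t (\<lambda>s. pot_ad L d (\<Psi> s) (dyson_term L d \<Psi> \<Theta> n s))"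
    by (intro mbpot_pot_ad assms)
  then have "mb t (\<lambda>s. pot_ad L d (\<Psi> s) (dyson_term L d \<Psi> \<Theta> n s) Z \<sigma> \<tau>)"
    using Suc.prems by (rule mbpotD)
  then show ?case by (simp add: indefinite_integral_continuous_1 mb_integrable)
qed

lemma mbpot_dyson: assumes h: "mbpot L d t \<Psi>" shows "mbpot L d t (\<lambda>s. dyson_term L d \<Psi> \<Theta> n s)"
  unfolding mbpot_def by (auto intro!: mb_cont dyson_cont[OF h])

lemma mbpot_dyson_ad: "mbpot L d t \<Psi> \<Longrightarrow> mbpot L d t (\<lambda>s. pot_ad L d (\<Psi> s) (dyson_term L d \<Psi> \<Theta> n s))"
  by (intro mbpot_pot_ad mbpot_dyson)

end

context
  fixes L :: "'a set" and d :: "'a \<Rightarrow> nat"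
  assumes finL: "finite L"
begin

lemma comm_bound_level:
  assumes k0: "0 \<le> \<kappa>0" and lev: "\<kappa>0 \<le> \<kappa>1" and eps: "0 < \<epsilon>"
  shows "pot_norm L d \<kappa>1 (pot_ad L d A B) \<le> (4 * exp (- \<kappa>0) / exp 1 / \<epsilon>) * pot_norm L d (\<kappa>1 + \<epsilon>) A * pot_norm L d (\<kappa>1 + \<epsilon>) B"
proof -
  have "pot_norm L d \<kappa>1 (pot_ad L d A B) \<le> 4 * exp (- \<kappa>1) / (exp 1 * (\<kappa>1 + \<epsilon> - \<kappa>1)) * pot_norm L d (\<kappa>1 + \<epsilon>) A * pot_norm L d (\<kappa>1 + \<epsilon>) B"
    by (rule comm_bound[OF finL]) (use k0 lev eps in auto)
  also have "\<dots> \<le> (4 * exp (- \<kappa>0) / exp 1 / \<epsilon>) * pot_norm L d (\<kappa>1 + \<epsilon>) A * pot_norm L d (\<kappa>1 + \<epsilon>) B"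
    using lev eps by (intro mult_right_mono pot_norm_nonneg[OF finL]) (auto simp: field_simps)
  finally show ?thesis .
qed

lemma D_bound:
  assumes mbP: "mbpot L d t \<Psi>" and eps: "0 < \<epsilon>" and k0: "0 \<le> \<kappa>0" and lev: "\<kappa>0 \<le> \<kappa> - real n * \<epsilon>"
  shows "k \<le> n \<Longrightarrow> u \<in> {0..t} \<Longrightarrow> pot_norm L d (\<kappa> - real k * \<epsilon>) (dyson_term L d \<Psi> \<Theta> k u)
     \<le> (4 * exp (- \<kappa>0) / exp 1 / \<epsilon>) ^ k * (integral {0..u} (\<lambda>s. pot_norm L d \<kappa> (\<Psi> s))) ^ k / fact k * pot_norm L d \<kappa> \<Theta>"
proof (induction k arbitrary: u)
  case 0 then show ?case by simp
next
  case (Suc k)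
  define c where "c = 4 * exp (- \<kappa>0) / exp 1 / \<epsilon>"
  have c0: "0 \<le> c" unfolding c_def using eps by simp
  define f where "f s = pot_norm L d \<kappa> (\<Psi> s)" for s
  define F where "F u = integral {0..u} f" for u
  define N\<Theta> where "N\<Theta> = pot_norm L d \<kappa> \<Theta>"
  have N0: "0 \<le> N\<Theta>" unfolding N\<Theta>_def by (rule pot_norm_nonneg[OF finL])
  have mbf: "mb t f" unfolding f_def by (rule mb_pot_norm[OF finL mbpotD[OF mbP]])
  have f0: "0 \<le> f s" for s unfolding f_def by (rule pot_norm_nonneg[OF finL])
  have contF: "continuous_on {0..t} F" unfolding F_def by (rule indefinite_integral_continuous_1[OF mb_integrable[OF mbf]])
  have u: "0 \<le> u" "u \<le> t" using Suc.prems by auto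
  have F0: "0 \<le> F s" if "s \<in> {0..t}" for s
    unfolding F_def using that f0 by (intro integral_nonneg mb_integrable_sub[OF mbf]) auto
  let ?l1 = "\<kappa> - real (Suc k) * \<epsilon>" and ?l2 = "\<kappa> - real k * \<epsilon>"
  have l12: "?l2 = ?l1 + \<epsilon>" by (simp add: algebra_simps)
  have lev1: "\<kappa>0 \<le> ?l1"
  proof -
    have "real (Suc k) * \<epsilon> \<le> real n * \<epsilon>" using Suc.prems eps by (intro mult_right_mono) auto
    then show ?thesis using lev by linarith
  qed
  let ?D = "\<lambda>s. dyson_term L d \<Psi> \<Theta> k s"
  have mbAD: "mbpot L d t (\<lambda>s. pot_ad L d (\<Psi> s) (?D s))" by (rule mbpot_dyson_ad[OF finL mbP])
  have "pot_norm L d ?l1 (dyson_term L d \<Psi> \<Theta> (Suc k) u)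
      = pot_norm L d ?l1 (\<lambda>Z \<sigma> \<tau>. integral {0..u} (\<lambda>s. pot_ad L d (\<Psi> s) (?D s) Z \<sigma> \<tau>))" by simp
  also have "\<dots> \<le> integral {0..u} (\<lambda>s. pot_norm L d ?l1 (pot_ad L d (\<Psi> s) (?D s)))"
    by (rule pot_norm_integral[OF finL mbpotD[OF mbAD] u])
  also have "\<dots> \<le> integral {0..u} (\<lambda>s. (c ^ Suc k * N\<Theta> / fact k) * (f s * (0 + F s) ^ k))"
  proof (rule integral_le)
    show "(\<lambda>s. pot_norm L d ?l1 (pot_ad L d (\<Psi> s) (?D s))) integrable_on {0..u}"
      by (rule mb_integrable_sub[OF mb_pot_norm[OF finL mbpotD[OF mbAD]] u(2) u(1)])
    show "(\<lambda>s. (c ^ Suc k * N\<Theta> / fact k) * (f s * (0 + F s) ^ k)) integrable_on {0..u}"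
      by (intro integrable_on_mult_right mb_integrable_sub[OF _ u(2) u(1)] mb_mult mbf mb_cont)
         (simp add: continuous_intros contF)
    fix s assume s: "s \<in> {0..u}"
    then have st: "s \<in> {0..t}" using u by auto
    have "pot_norm L d ?l1 (pot_ad L d (\<Psi> s) (?D s)) \<le> c * pot_norm L d ?l2 (\<Psi> s) * pot_norm L d ?l2 (?D s)"
      unfolding c_def l12 by (rule comm_bound_level[OF k0 lev1 eps])
    also have "\<dots> \<le> c * f s * (c ^ k * F s ^ k / fact k * N\<Theta>)"
    proof (intro mult_mono mult_left_mono)
      show "pot_norm L d ?l2 (\<Psi> s) \<le> f s" unfolding f_def using eps by (intro pot_norm_mono[OF finL]) auto
      show "pot_norm L d ?l2 (?D s) \<le> c ^ k * F s ^ k / fact k * N\<Theta>"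
        using Suc.IH[OF _ st] Suc.prems unfolding c_def F_def f_def N\<Theta>_def by simp
    qed (auto simp: c0 f0 pot_norm_nonneg[OF finL])
    also have "\<dots> = (c ^ Suc k * N\<Theta> / fact k) * (f s * (0 + F s) ^ k)" by (simp add: field_simps)
    finally show "pot_norm L d ?l1 (pot_ad L d (\<Psi> s) (?D s)) \<le> (c ^ Suc k * N\<Theta> / fact k) * (f s * (0 + F s) ^ k)" .
  qed
  also have "\<dots> = (c ^ Suc k * N\<Theta> / fact k) * integral {0..u} (\<lambda>s. f s * (0 + F s) ^ k)" by simp
  also have "\<dots> \<le> (c ^ Suc k * N\<Theta> / fact k) * (((0 + F u) ^ Suc k - 0 ^ Suc k) / real (Suc k))"
    unfolding F_def by (intro mult_left_mono ftc_bound[OF mbf _ order_refl u]) (auto simp: f0 c0 N0)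
  also have "\<dots> = c ^ Suc k * F u ^ Suc k / fact (Suc k) * N\<Theta>" by (simp add: field_simps)
  finally show ?case unfolding c_def F_def f_def N\<Theta>_def .
qed

end

context
  fixes L :: "'a set" and d :: "'a \<Rightarrow> nat"
  assumes finL: "finite L"
begin

lemma E_step:
  assumes mbP: "mbpot L d t \<Phi>" and mbP': "mbpot L d t \<Phi>'" and eps: "0 < \<epsilon>" and k0: "0 \<le> \<kappa>0"
    and lev: "\<kappa>0 \<le> \<kappa> - real (Suc k) * \<epsilon>" and u: "0 \<le> u" "u \<le> t"
  shows "pot_norm L d (\<kappa> - real (Suc k) * \<epsilon>) (dyson_term L d \<Phi> \<Theta> (Suc k) u - dyson_term L d \<Phi>' \<Theta> (Suc k) u)
    \<le> integral {0..u} (\<lambda>s. (4 * exp (- \<kappa>0) / exp 1 / \<epsilon>) * pot_norm L d \<kappa> (\<Phi> s - \<Phi>' s) * pot_norm L d (\<kappa> - real k * \<epsilon>) (dyson_term L d \<Phi> \<Theta> k s)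
        + (4 * exp (- \<kappa>0) / exp 1 / \<epsilon>) * pot_norm L d \<kappa> (\<Phi>' s) * pot_norm L d (\<kappa> - real k * \<epsilon>) (dyson_term L d \<Phi> \<Theta> k s - dyson_term L d \<Phi>' \<Theta> k s))"
proof -
  define c where "c = 4 * exp (- \<kappa>0) / exp 1 / \<epsilon>"
  have c0: "0 \<le> c" unfolding c_def using eps by simp
  let ?l1 = "\<kappa> - real (Suc k) * \<epsilon>" and ?l2 = "\<kappa> - real k * \<epsilon>"
  have l12: "?l2 = ?l1 + \<epsilon>" by (simp add: algebra_simps)
  let ?D = "\<lambda>s. dyson_term L d \<Phi> \<Theta> k s" and ?D' = "\<lambda>s. dyson_term L d \<Phi>' \<Theta> k s"
  define R where "R s = pot_ad L d (\<Phi> s - \<Phi>' s) (?D s) + pot_ad L d (\<Phi>' s) (?D s - ?D' s)" for s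
  have mbD: "mbpot L d t ?D" "mbpot L d t ?D'" by (rule mbpot_dyson[OF finL mbP], rule mbpot_dyson[OF finL mbP'])
  have mbR: "mbpot L d t R" unfolding R_def
    by (intro mbpot_add mbpot_pot_ad[OF finL] mbpot_diff mbD mbP mbP')
  have mbA: "mbpot L d t (\<lambda>s. pot_ad L d (\<Phi> s) (?D s))" "mbpot L d t (\<lambda>s. pot_ad L d (\<Phi>' s) (?D' s))"
    by (rule mbpot_dyson_ad[OF finL mbP], rule mbpot_dyson_ad[OF finL mbP'])
  have "pot_norm L d ?l1 (dyson_term L d \<Phi> \<Theta> (Suc k) u - dyson_term L d \<Phi>' \<Theta> (Suc k) u)
      = pot_norm L d ?l1 (\<lambda>Z \<sigma> \<tau>. integral {0..u} (\<lambda>s. R s Z \<sigma> \<tau>))"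
  proof (rule pot_norm_cong[OF finL])
    fix Z \<sigma> \<tau> assume Z: "Z \<subseteq> L" and \<sigma>: "\<sigma> \<in> confs L d" and \<tau>: "\<tau> \<in> confs L d"
    have i1: "(\<lambda>s. pot_ad L d (\<Phi> s) (?D s) Z \<sigma> \<tau>) integrable_on {0..u}"
      by (rule mb_integrable_sub[OF mbpotD[OF mbA(1) Z \<sigma> \<tau>] u(2,1)])
    have i2: "(\<lambda>s. pot_ad L d (\<Phi>' s) (?D' s) Z \<sigma> \<tau>) integrable_on {0..u}"
      by (rule mb_integrable_sub[OF mbpotD[OF mbA(2) Z \<sigma> \<tau>] u(2,1)])
    have "(dyson_term L d \<Phi> \<Theta> (Suc k) u - dyson_term L d \<Phi>' \<Theta> (Suc k) u) Z \<sigma> \<tau>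
        = integral {0..u} (\<lambda>s. pot_ad L d (\<Phi> s) (?D s) Z \<sigma> \<tau>) - integral {0..u} (\<lambda>s. pot_ad L d (\<Phi>' s) (?D' s) Z \<sigma> \<tau>)"
      by simp
    also have "\<dots> = integral {0..u} (\<lambda>s. pot_ad L d (\<Phi> s) (?D s) Z \<sigma> \<tau> - pot_ad L d (\<Phi>' s) (?D' s) Z \<sigma> \<tau>)"
      by (rule Henstock_Kurzweil_Integration.integral_diff[OF i1 i2, symmetric])
    also have "\<dots> = integral {0..u} (\<lambda>s. R s Z \<sigma> \<tau>)"
      unfolding R_def by (simp only: pot_ad_bilin plus_fun_apply)
    finally show "(dyson_term L d \<Phi> \<Theta> (Suc k) u - dyson_term L d \<Phi>' \<Theta> (Suc k) u) Z \<sigma> \<tau> = integral {0..u} (\<lambda>s. R s Z \<sigma> \<tau>)" .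
  qed
  also have "\<dots> \<le> integral {0..u} (\<lambda>s. pot_norm L d ?l1 (R s))"
    by (rule pot_norm_integral[OF finL mbpotD[OF mbR] u])
  also have "\<dots> \<le> integral {0..u} (\<lambda>s. c * pot_norm L d \<kappa> (\<Phi> s - \<Phi>' s) * pot_norm L d ?l2 (?D s)
        + c * pot_norm L d \<kappa> (\<Phi>' s) * pot_norm L d ?l2 (?D s - ?D' s))"
  proof (rule integral_le)
    show "(\<lambda>s. pot_norm L d ?l1 (R s)) integrable_on {0..u}"
      by (rule mb_integrable_sub[OF mb_pot_norm[OF finL mbpotD[OF mbR]] u(2,1)])
    show "(\<lambda>s. c * pot_norm L d \<kappa> (\<Phi> s - \<Phi>' s) * pot_norm L d ?l2 (?D s)
        + c * pot_norm L d \<kappa> (\<Phi>' s) * pot_norm L d ?l2 (?D s - ?D' s)) integrable_on {0..u}"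
    proof -
      have m1: "mb t (\<lambda>s. pot_norm L d \<kappa> (\<Phi> s - \<Phi>' s))" by (rule mb_pot_norm[OF finL mbpotD[OF mbpot_diff[OF mbP mbP']]])
      have m2: "mb t (\<lambda>s. pot_norm L d ?l2 (?D s))" by (rule mb_pot_norm[OF finL mbpotD[OF mbD(1)]])
      have m3: "mb t (\<lambda>s. pot_norm L d \<kappa> (\<Phi>' s))" by (rule mb_pot_norm[OF finL mbpotD[OF mbP']])
      have m4: "mb t (\<lambda>s. pot_norm L d ?l2 (?D s - ?D' s))" by (rule mb_pot_norm[OF finL mbpotD[OF mbpot_diff[OF mbD]]])
      show ?thesis by (intro mb_integrable_sub[OF _ u(2,1)] mb_add mb_mult mb_const m1 m2 m3 m4)
    qed
    fix s assume s: "s \<in> {0..u}"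
    have lev2: "\<kappa>0 \<le> ?l1" using lev by simp
    have "pot_norm L d ?l1 (R s) \<le> pot_norm L d ?l1 (pot_ad L d (\<Phi> s - \<Phi>' s) (?D s)) + pot_norm L d ?l1 (pot_ad L d (\<Phi>' s) (?D s - ?D' s))"
      unfolding R_def by (rule pot_norm_add[OF finL])
    also have "\<dots> \<le> c * pot_norm L d ?l2 (\<Phi> s - \<Phi>' s) * pot_norm L d ?l2 (?D s) + c * pot_norm L d ?l2 (\<Phi>' s) * pot_norm L d ?l2 (?D s - ?D' s)"
      unfolding c_def l12 by (intro add_mono comm_bound_level[OF finL k0 lev2 eps])
    also have "\<dots> \<le> c * pot_norm L d \<kappa> (\<Phi> s - \<Phi>' s) * pot_norm L d ?l2 (?D s) + c * pot_norm L d \<kappa> (\<Phi>' s) * pot_norm L d ?l2 (?D s - ?D' s)"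
      using eps c0 by (intro add_mono mult_right_mono mult_left_mono pot_norm_mono[OF finL] pot_norm_nonneg[OF finL]) auto
    finally show "pot_norm L d ?l1 (R s) \<le> c * pot_norm L d \<kappa> (\<Phi> s - \<Phi>' s) * pot_norm L d ?l2 (?D s) + c * pot_norm L d \<kappa> (\<Phi>' s) * pot_norm L d ?l2 (?D s - ?D' s)" .
  qed
  finally show ?thesis unfolding c_def .
qed

end

lemma int_mono:
  fixes f :: "real \<Rightarrow> real"
  assumes "mb t f" "\<And>s. 0 \<le> f s" "0 \<le> s" "s \<le> u" "u \<le> t"
  shows "integral {0..s} f \<le> integral {0..u} f"
  by (rule integral_subset_le) (use assms in \<open>auto intro: mb_integrable_sub\<close>)

lemma int_nonneg:
  fixes f :: "real \<Rightarrow> real"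
  assumes "mb t f" "\<And>s. 0 \<le> f s" "0 \<le> u" "u \<le> t"
  shows "0 \<le> integral {0..u} f"
  by (rule integral_nonneg) (use assms in \<open>auto intro: mb_integrable_sub\<close>)

context
  fixes L :: "'a set" and d :: "'a \<Rightarrow> nat"
  assumes finL: "finite L"
begin

lemma E_bound:
  assumes mbP: "mbpot L d t \<Phi>" and mbP': "mbpot L d t \<Phi>'" and eps: "0 < \<epsilon>" and k0: "0 \<le> \<kappa>0"
    and lev: "\<kappa>0 \<le> \<kappa> - real n * \<epsilon>"
  shows "Suc k \<le> n \<Longrightarrow> u \<in> {0..t} \<Longrightarrow>
    pot_norm L d (\<kappa> - real (Suc k) * \<epsilon>) (dyson_term L d \<Phi> \<Theta> (Suc k) u - dyson_term L d \<Phi>' \<Theta> (Suc k) u)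
    \<le> (4 * exp (- \<kappa>0) / exp 1 / \<epsilon>) ^ Suc k * pot_norm L d \<kappa> \<Theta> * integral {0..u} (\<lambda>s. pot_norm L d \<kappa> (\<Phi> s - \<Phi>' s))
       * (integral {0..u} (\<lambda>s. pot_norm L d \<kappa> (\<Phi> s)) + integral {0..u} (\<lambda>s. pot_norm L d \<kappa> (\<Phi>' s))) ^ k / fact k"
proof (induction k arbitrary: u)
  define c where "c = 4 * exp (- \<kappa>0) / exp 1 / \<epsilon>"
  have c0: "0 \<le> c" unfolding c_def using eps by simp
  define g where "g s = pot_norm L d \<kappa> (\<Phi> s - \<Phi>' s)" for s
  define f where "f s = pot_norm L d \<kappa> (\<Phi> s)" for s
  define f' where "f' s = pot_norm L d \<kappa> (\<Phi>' s)" for s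
  define N\<Theta> where "N\<Theta> = pot_norm L d \<kappa> \<Theta>"
  have N0: "0 \<le> N\<Theta>" unfolding N\<Theta>_def by (rule pot_norm_nonneg[OF finL])
  have mbg: "mb t g" unfolding g_def by (rule mb_pot_norm[OF finL mbpotD[OF mbpot_diff[OF mbP mbP']]])
  have mbf: "mb t f" unfolding f_def by (rule mb_pot_norm[OF finL mbpotD[OF mbP]])
  have mbf': "mb t f'" unfolding f'_def by (rule mb_pot_norm[OF finL mbpotD[OF mbP']])
  have g0: "0 \<le> g s" "0 \<le> f s" "0 \<le> f' s" for s unfolding g_def f_def f'_def by (simp_all add: pot_norm_nonneg[OF finL])
  case 0
  then have u: "0 \<le> u" "u \<le> t" by auto
  have lev0: "\<kappa>0 \<le> \<kappa> - real (Suc 0) * \<epsilon>"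
  proof -
    have "real (Suc 0) * \<epsilon> \<le> real n * \<epsilon>" using 0 eps by (intro mult_right_mono) auto
    then show ?thesis using lev by linarith
  qed
  have E0: "dyson_term L d \<Phi> \<Theta> 0 s - dyson_term L d \<Phi>' \<Theta> 0 s = (\<lambda>_ _ _. 0)" for s by (simp add: fun_eq_iff)
  have "pot_norm L d (\<kappa> - real (Suc 0) * \<epsilon>) (dyson_term L d \<Phi> \<Theta> (Suc 0) u - dyson_term L d \<Phi>' \<Theta> (Suc 0) u)
     \<le> integral {0..u} (\<lambda>s. c * g s * pot_norm L d (\<kappa> - real 0 * \<epsilon>) (dyson_term L d \<Phi> \<Theta> 0 s)
        + c * f' s * pot_norm L d (\<kappa> - real 0 * \<epsilon>) (dyson_term L d \<Phi> \<Theta> 0 s - dyson_term L d \<Phi>' \<Theta> 0 s))"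
    unfolding c_def g_def f'_def by (rule E_step[OF finL mbP mbP' eps k0 lev0 u])
  also have "\<dots> = integral {0..u} (\<lambda>s. (c * N\<Theta>) * g s)"
    unfolding E0 by (simp add: pot_norm_zero[OF finL] N\<Theta>_def ac_simps)
  also have "\<dots> = c ^ Suc 0 * N\<Theta> * integral {0..u} g * (integral {0..u} f + integral {0..u} f') ^ 0 / fact 0" by simp
  finally show ?case unfolding c_def g_def f_def f'_def N\<Theta>_def .
next
  define c where "c = 4 * exp (- \<kappa>0) / exp 1 / \<epsilon>"
  have c0: "0 \<le> c" unfolding c_def using eps by simp
  define g where "g s = pot_norm L d \<kappa> (\<Phi> s - \<Phi>' s)" for s
  define f where "f s = pot_norm L d \<kappa> (\<Phi> s)" for s
  define f' where "f' s = pot_norm L d \<kappa> (\<Phi>' s)" for s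
  define N\<Theta> where "N\<Theta> = pot_norm L d \<kappa> \<Theta>"
  have N0: "0 \<le> N\<Theta>" unfolding N\<Theta>_def by (rule pot_norm_nonneg[OF finL])
  have mbg: "mb t g" unfolding g_def by (rule mb_pot_norm[OF finL mbpotD[OF mbpot_diff[OF mbP mbP']]])
  have mbf: "mb t f" unfolding f_def by (rule mb_pot_norm[OF finL mbpotD[OF mbP]])
  have mbf': "mb t f'" unfolding f'_def by (rule mb_pot_norm[OF finL mbpotD[OF mbP']])
  have g0: "0 \<le> g s" "0 \<le> f s" "0 \<le> f' s" for s unfolding g_def f_def f'_def by (simp_all add: pot_norm_nonneg[OF finL])
  define F where "F u = integral {0..u} f" for u
  define F' where "F' u = integral {0..u} f'" for u
  define G where "G u = integral {0..u} g" for u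
  have contF: "continuous_on {0..t} F" "continuous_on {0..t} F'" "continuous_on {0..t} G"
    unfolding F_def F'_def G_def by (rule indefinite_integral_continuous_1[OF mb_integrable], fact)+
  case (Suc j)
  let ?k = "Suc j"
  have u: "0 \<le> u" "u \<le> t" using Suc.prems by auto
  have levk: "\<kappa>0 \<le> \<kappa> - real (Suc ?k) * \<epsilon>"
  proof -
    have "real (Suc ?k) * \<epsilon> \<le> real n * \<epsilon>" using Suc.prems eps by (intro mult_right_mono) auto
    then show ?thesis using lev by linarith
  qed
  have Fu: "0 \<le> F u" "0 \<le> F' u" "0 \<le> G u" unfolding F_def F'_def G_def
    using int_nonneg[OF mbf g0(2) u] int_nonneg[OF mbf' g0(3) u] int_nonneg[OF mbg g0(1) u] by auto
  let ?D = "\<lambda>s. dyson_term L d \<Phi> \<Theta> ?k s" and ?D' = "\<lambda>s. dyson_term L d \<Phi>' \<Theta> ?k s"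
  define K1 where "K1 = c ^ Suc ?k * N\<Theta> * F u ^ ?k / fact ?k"
  define K2 where "K2 = c ^ Suc ?k * N\<Theta> * G u / fact j"
  have K0: "0 \<le> K1" "0 \<le> K2" unfolding K1_def K2_def using c0 N0 Fu by auto
  have "pot_norm L d (\<kappa> - real (Suc ?k) * \<epsilon>) (dyson_term L d \<Phi> \<Theta> (Suc ?k) u - dyson_term L d \<Phi>' \<Theta> (Suc ?k) u)
     \<le> integral {0..u} (\<lambda>s. c * g s * pot_norm L d (\<kappa> - real ?k * \<epsilon>) (?D s)
        + c * f' s * pot_norm L d (\<kappa> - real ?k * \<epsilon>) (?D s - ?D' s))"
    unfolding c_def g_def f'_def by (rule E_step[OF finL mbP mbP' eps k0 levk u])
  also have "\<dots> \<le> integral {0..u} (\<lambda>s. K1 * g s + K2 * (f' s * (F u + F' s) ^ j))"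
  proof (rule integral_le)
    have m2: "mb t (\<lambda>s. pot_norm L d (\<kappa> - real ?k * \<epsilon>) (?D s))" by (rule mb_pot_norm[OF finL mbpotD[OF mbpot_dyson[OF finL mbP]]])
    have m4: "mb t (\<lambda>s. pot_norm L d (\<kappa> - real ?k * \<epsilon>) (?D s - ?D' s))"
      by (rule mb_pot_norm[OF finL mbpotD[OF mbpot_diff[OF mbpot_dyson[OF finL mbP] mbpot_dyson[OF finL mbP']]]])
    show "(\<lambda>s. c * g s * pot_norm L d (\<kappa> - real ?k * \<epsilon>) (?D s) + c * f' s * pot_norm L d (\<kappa> - real ?k * \<epsilon>) (?D s - ?D' s)) integrable_on {0..u}"
      by (intro mb_integrable_sub[OF _ u(2,1)] mb_add mb_mult mb_const mbg mbf' m2 m4)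
    show "(\<lambda>s. K1 * g s + K2 * (f' s * (F u + F' s) ^ j)) integrable_on {0..u}"
      by (intro mb_integrable_sub[OF _ u(2,1)] mb_add mb_mult mb_const mbg mbf' mb_cont) (simp add: continuous_intros contF)
    fix s assume s: "s \<in> {0..u}"
    then have st: "s \<in> {0..t}" using u by auto
    have mono: "F s \<le> F u" "G s \<le> G u" unfolding F_def G_def using s u
      by (auto intro!: int_mono[OF mbf g0(2)] int_mono[OF mbg g0(1)])
    have Fs: "0 \<le> F s" "0 \<le> F' s" "0 \<le> G s" unfolding F_def F'_def G_def
      using int_nonneg[OF mbf g0(2)] int_nonneg[OF mbf' g0(3)] int_nonneg[OF mbg g0(1)] st by auto
    have Db: "pot_norm L d (\<kappa> - real ?k * \<epsilon>) (?D s) \<le> c ^ ?k * F s ^ ?k / fact ?k * N\<Theta>"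
      unfolding c_def F_def f_def N\<Theta>_def by (rule D_bound[OF finL mbP eps k0 lev]) (use Suc.prems st in auto)
    have Eb: "pot_norm L d (\<kappa> - real ?k * \<epsilon>) (?D s - ?D' s) \<le> c ^ ?k * N\<Theta> * G s * (F s + F' s) ^ j / fact j"
      unfolding c_def G_def F_def F'_def f_def f'_def g_def N\<Theta>_def by (rule Suc.IH) (use Suc.prems st in auto)
    have "c * g s * pot_norm L d (\<kappa> - real ?k * \<epsilon>) (?D s) \<le> c * g s * (c ^ ?k * F s ^ ?k / fact ?k * N\<Theta>)"
      using Db c0 g0 by (intro mult_left_mono) auto
    also have "\<dots> \<le> c * g s * (c ^ ?k * F u ^ ?k / fact ?k * N\<Theta>)"
      using c0 g0 N0 Fs mono by (intro mult_left_mono mult_right_mono divide_right_mono power_mono) auto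
    also have "\<dots> = K1 * g s" unfolding K1_def by (simp add: field_simps)
    finally have t1: "c * g s * pot_norm L d (\<kappa> - real ?k * \<epsilon>) (?D s) \<le> K1 * g s" .
    have "c * f' s * pot_norm L d (\<kappa> - real ?k * \<epsilon>) (?D s - ?D' s) \<le> c * f' s * (c ^ ?k * N\<Theta> * G s * (F s + F' s) ^ j / fact j)"
      using Eb c0 g0 by (intro mult_left_mono) auto
    also have "\<dots> \<le> c * f' s * (c ^ ?k * N\<Theta> * G u * (F u + F' s) ^ j / fact j)"
      using c0 g0 N0 Fs mono Fu
      by (intro mult_left_mono mult_right_mono mult_mono divide_right_mono power_mono add_right_mono add_nonneg_nonneg) auto
    also have "\<dots> = K2 * (f' s * (F u + F' s) ^ j)" unfolding K2_def by (simp add: field_simps)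
    finally have t2: "c * f' s * pot_norm L d (\<kappa> - real ?k * \<epsilon>) (?D s - ?D' s) \<le> K2 * (f' s * (F u + F' s) ^ j)" .
    show "c * g s * pot_norm L d (\<kappa> - real ?k * \<epsilon>) (?D s) + c * f' s * pot_norm L d (\<kappa> - real ?k * \<epsilon>) (?D s - ?D' s)
        \<le> K1 * g s + K2 * (f' s * (F u + F' s) ^ j)" using t1 t2 by simp
  qed
  also have "\<dots> = K1 * G u + K2 * integral {0..u} (\<lambda>s. f' s * (F u + F' s) ^ j)"
  proof -
    have i1: "(\<lambda>s. K1 * g s) integrable_on {0..u}" by (intro integrable_on_mult_right mb_integrable_sub[OF mbg u(2,1)])
    have i2: "(\<lambda>s. K2 * (f' s * (F u + F' s) ^ j)) integrable_on {0..u}"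
      by (intro integrable_on_mult_right mb_integrable_sub[OF _ u(2,1)] mb_mult mbf' mb_cont) (simp add: continuous_intros contF)
    show ?thesis unfolding Henstock_Kurzweil_Integration.integral_add[OF i1 i2] G_def by simp
  qed
  also have "\<dots> \<le> K1 * G u + K2 * (((F u + F' u) ^ Suc j - F u ^ Suc j) / real (Suc j))"
    unfolding F'_def using K0 by (intro add_left_mono mult_left_mono ftc_bound[OF mbf' _ Fu(1) u]) (auto simp: g0)
  also have "\<dots> = c ^ Suc ?k * N\<Theta> * G u * (F u + F' u) ^ ?k / fact ?k"
  proof -
    have fj: "(fact j :: real) \<noteq> 0" "(1 + real j) \<noteq> 0" by simp_all
    have fk: "(fact (Suc j) :: real) = (1 + real j) * fact j" by simp
    define A where "A = c ^ Suc ?k * N\<Theta> * G u / fact ?k"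
    have a1: "K1 * G u = A * F u ^ ?k" unfolding K1_def A_def by simp
    have a2: "K2 * (((F u + F' u) ^ Suc j - F u ^ Suc j) / real (Suc j)) = A * ((F u + F' u) ^ ?k - F u ^ ?k)"
      unfolding K2_def A_def fk using fj by (simp add: field_simps)
    have "K1 * G u + K2 * (((F u + F' u) ^ Suc j - F u ^ Suc j) / real (Suc j)) = A * (F u + F' u) ^ ?k"
      unfolding a1 a2 by (simp add: algebra_simps)
    then show ?thesis unfolding A_def by simp
  qed
  finally show ?case unfolding c_def G_def F_def F'_def g_def f_def f'_def N\<Theta>_def .
qed

end

context
  fixes L :: "'a set" and d :: "'a \<Rightarrow> nat"
  assumes finL: "finite L"
begin

definition Wn' :: "real \<Rightarrow> 'a pot \<Rightarrow> real" where
  "Wn' \<kappa> Q = (\<Sum>Z\<in>Pow L - {{}}. exp (\<kappa> * real (card Z)) * l1 L d (Q Z))"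

lemma pot_norm_le_Wn': "pot_norm L d \<kappa> Q \<le> Wn' \<kappa> Q"
proof (rule pot_norm_le[OF finL])
  show "0 \<le> Wn' \<kappa> Q" unfolding Wn'_def by (auto intro!: sum_nonneg simp: l1_nonneg[OF finL])
  fix x assume "x \<in> L"
  have "psum L d \<kappa> Q x \<le> (\<Sum>Z\<in>{Z. Z \<subseteq> L \<and> x \<in> Z}. exp (\<kappa> * real (card Z)) * l1 L d (Q Z))"
    unfolding psum_def by (rule sum_mono) (auto intro!: mult_left_mono opnorm_le_l1[OF finL])
  also have "\<dots> \<le> Wn' \<kappa> Q" unfolding Wn'_def
    by (rule sum_mono2) (auto simp: finL l1_nonneg[OF finL])
  finally show "psum L d \<kappa> Q x \<le> Wn' \<kappa> Q" .
qed

lemma pot_norm_suminf: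
  fixes Q :: "nat \<Rightarrow> 'a pot" and S :: "'a pot"
  assumes hS: "\<And>Z \<sigma> \<tau>. Z \<subseteq> L \<Longrightarrow> Z \<noteq> {} \<Longrightarrow> \<sigma> \<in> confs L d \<Longrightarrow> \<tau> \<in> confs L d \<Longrightarrow> (\<lambda>n. Q n Z \<sigma> \<tau>) sums S Z \<sigma> \<tau>"
    and sm: "summable (\<lambda>n. pot_norm L d \<kappa> (Q n))"
  shows "pot_norm L d \<kappa> S \<le> (\<Sum>n. pot_norm L d \<kappa> (Q n))"
proof -
  define Sm where "Sm m = (\<Sum>n<m. Q n)" for m
  have Sm_apply: "Sm m Z \<sigma> \<tau> = (\<Sum>n<m. Q n Z \<sigma> \<tau>)" for m Z \<sigma> \<tau> unfolding Sm_def by (simp add: sum_fun_apply)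
  have bound: "pot_norm L d \<kappa> S \<le> (\<Sum>n. pot_norm L d \<kappa> (Q n)) + Wn' \<kappa> (S - Sm m)" for m
  proof -
    have "S = Sm m + (S - Sm m)" by simp
    then have "pot_norm L d \<kappa> S \<le> pot_norm L d \<kappa> (Sm m) + pot_norm L d \<kappa> (S - Sm m)"
      by (metis pot_norm_add[OF finL])
    also have "pot_norm L d \<kappa> (Sm m) \<le> (\<Sum>n<m. pot_norm L d \<kappa> (Q n))" unfolding Sm_def by (rule pot_norm_sum[OF finL])
    also have "\<dots> \<le> (\<Sum>n. pot_norm L d \<kappa> (Q n))" by (rule sum_le_suminf[OF sm]) (auto simp: pot_norm_nonneg[OF finL])
    also have "pot_norm L d \<kappa> (S - Sm m) \<le> Wn' \<kappa> (S - Sm m)" by (rule pot_norm_le_Wn')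
    finally show ?thesis by simp
  qed
  have lim: "(\<lambda>m. Wn' \<kappa> (S - Sm m)) \<longlonglongrightarrow> 0"
  proof -
    have e: "(\<lambda>m. cmod ((S - Sm m) Z \<sigma> \<tau>)) \<longlonglongrightarrow> 0" if "Z \<in> Pow L - {{}}" "\<sigma> \<in> confs L d" "\<tau> \<in> confs L d" for Z \<sigma> \<tau>
    proof -
      have "(\<lambda>m. Sm m Z \<sigma> \<tau>) \<longlonglongrightarrow> S Z \<sigma> \<tau>" using hS[of Z \<sigma> \<tau>] that unfolding sums_def Sm_apply by auto
      then have "(\<lambda>m. S Z \<sigma> \<tau> - Sm m Z \<sigma> \<tau>) \<longlonglongrightarrow> S Z \<sigma> \<tau> - S Z \<sigma> \<tau>" by (intro tendsto_diff tendsto_const)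
      then have "(\<lambda>m. cmod (S Z \<sigma> \<tau> - Sm m Z \<sigma> \<tau>)) \<longlonglongrightarrow> cmod (S Z \<sigma> \<tau> - S Z \<sigma> \<tau>)" by (rule tendsto_norm)
      then show ?thesis by simp
    qed
    have "(\<lambda>m. \<Sum>Z\<in>Pow L - {{}}. exp (\<kappa> * real (card Z)) * (\<Sum>\<sigma>\<in>confs L d. \<Sum>\<tau>\<in>confs L d. cmod ((S - Sm m) Z \<sigma> \<tau>)))
        \<longlonglongrightarrow> (\<Sum>Z\<in>Pow L - {{}}. exp (\<kappa> * real (card Z)) * (\<Sum>\<sigma>\<in>confs L d. \<Sum>\<tau>\<in>confs L d. 0))"
      by (intro tendsto_sum tendsto_mult_left e) auto
    then show ?thesis unfolding Wn'_def l1_def by simp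
  qed
  have "(\<lambda>m. (\<Sum>n. pot_norm L d \<kappa> (Q n)) + Wn' \<kappa> (S - Sm m)) \<longlonglongrightarrow> (\<Sum>n. pot_norm L d \<kappa> (Q n)) + 0"
    by (intro tendsto_add tendsto_const lim)
  then show ?thesis using bound by (intro tendsto_le[OF trivial_limit_sequentially _ tendsto_const]) auto
qed

end

lemma aux_div: assumes "0 < (a::real)" "0 < f" shows "b ^ Suc k / (a * f) = (a ^ k / f) * (b / a) ^ Suc k"
  using assms by (simp add: power_divide field_simps)

lemma R1: "real (Suc k) ^ k / fact k \<le> exp (real k)"
proof (induction k)
  case 0 then show ?case by simp
next
  case (Suc k)
  have r: "(1 + 1 / real (Suc k)) ^ Suc k \<le> exp 1"
    using exp_ge_one_plus_x_over_n_power_n[where x=1 and n="Suc k"] by simp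
  have q: "1 + 1 / real (Suc k) = real (Suc (Suc k)) / real (Suc k)" by (simp add: field_simps)
  have eq: "real (Suc (Suc k)) ^ Suc k / fact (Suc k) = (real (Suc k) ^ k / fact k) * (1 + 1 / real (Suc k)) ^ Suc k"
    unfolding q fact_Suc of_nat_mult by (rule aux_div) auto
  also have "\<dots> \<le> exp (real k) * exp 1"
    using Suc.IH r by (intro mult_mono) auto
  also have "\<dots> = exp (real (Suc k))" by (simp add: exp_add[symmetric])
  finally show ?case .
qed

lemma R1': "real n ^ n / fact n \<le> exp (real n)"
proof (cases n)
  case 0 then show ?thesis by simp
next
  case (Suc k)
  have fk: "(fact k :: real) \<noteq> 0" "(1 + real k) \<noteq> 0" by simp_all
  have "real n ^ n / fact n = (real (Suc k) * real (Suc k) ^ k) / (real (Suc k) * fact k)"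
    unfolding Suc by (simp only: power_Suc fact_Suc of_nat_mult)
  also have "\<dots> = real (Suc k) ^ k / fact k" by (rule mult_divide_mult_cancel_left) simp
  also have "\<dots> \<le> exp (real k)" by (rule R1)
  also have "\<dots> \<le> exp (real n)" unfolding Suc by simp
  finally show ?thesis .
qed

lemma R2: "real (Suc k) * (2/3) ^ k \<le> 4 * ((5::real)/6) ^ k"
proof -
  have "1 + real k * (1/4) \<le> (1 + 1/4 :: real) ^ k" by (rule Bernoulli_inequality) simp
  then have "real (Suc k) \<le> 4 * (5/4 :: real) ^ k" by simp
  then have "real (Suc k) * (2/3) ^ k \<le> 4 * (5/4 :: real) ^ k * (2/3) ^ k" by (rule mult_right_mono) simp
  also have "\<dots> = 4 * ((5/4) * (2/3) :: real) ^ k" by (simp only: power_mult_distrib mult.assoc)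
  also have "(5/4) * (2/3) = (5/6 :: real)" by simp
  finally show ?thesis .
qed

lemma kexp: "0 < (x::real) \<Longrightarrow> x * exp (- x) \<le> exp (-1)"
proof -
  assume x: "0 < x"
  have "x \<le> exp (x - 1)" using exp_ge_add_one_self[of "x - 1"] by simp
  then have "x * exp (- x) \<le> exp (x - 1) * exp (- x)" by (rule mult_right_mono) simp
  also have "\<dots> = exp (-1)" by (simp add: exp_add[symmetric])
  finally show ?thesis .
qed


lemma alg2: "((s::real) * x) ^ Suc k * N * G * P ^ k / f = x * N * G * (s * ((x * P) ^ k * (s ^ k / f)))"
  by (simp add: power_mult_distrib ac_simps)

theorem lemma7:
  fixes L :: "'a set" and d :: "'a \<Rightarrow> nat"
    and \<Phi> \<Phi>' :: "real \<Rightarrow> 'a pot" and \<Theta> :: "'a pot"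
    and t \<kappa> \<kappa>' lam M C :: real
  assumes "finite L" and "\<forall>x\<in>L. 1 \<le> d x"
    and "0 < t"
    and "regular_tpot L d t \<Phi>" and "regular_tpot L d t \<Phi>'"
    and "is_potential L d \<Theta>"
    and "0 < \<kappa>'" and "\<kappa>' < \<kappa>"
    and "lam = max (tpot_norm L d \<kappa> t \<Phi>) (tpot_norm L d \<kappa> t \<Phi>')"
    and "12 * lam * t \<le> \<kappa> - \<kappa>'"
    and "M = 72 / (\<kappa>' * (\<kappa> - \<kappa>'))"
    and "C = 1 + M * lam * t"
  shows "pot_norm L d \<kappa>' (evol L d \<Phi> t \<Theta> - evol L d \<Phi>' t \<Theta>)
           \<le> C ^ 3 * M * t * pot_norm L d \<kappa> \<Theta> * tpot_norm L d \<kappa> t (\<lambda>s. \<Phi> s - \<Phi>' s)"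
proof -
  note finL = assms(1)
  have t0: "0 < t" by (rule assms(3))
  have mbP: "mbpot L d t \<Phi>" by (rule regular_mbpot[OF assms(4)])
  have mbP': "mbpot L d t \<Phi>'" by (rule regular_mbpot[OF assms(5)])
  define \<delta> where "\<delta> = \<kappa> - \<kappa>'"
  have \<delta>0: "0 < \<delta>" using assms(8) unfolding \<delta>_def by simp
  have k'0: "0 \<le> \<kappa>'" using assms(7) by simp
  define N\<Theta> where "N\<Theta> = pot_norm L d \<kappa> \<Theta>"
  have N0: "0 \<le> N\<Theta>" unfolding N\<Theta>_def by (rule pot_norm_nonneg[OF finL])
  define F where "F = integral {0..t} (\<lambda>s. pot_norm L d \<kappa> (\<Phi> s))"
  define F' where "F' = integral {0..t} (\<lambda>s. pot_norm L d \<kappa> (\<Phi>' s))"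
  define G where "G = integral {0..t} (\<lambda>s. pot_norm L d \<kappa> (\<Phi> s - \<Phi>' s))"
  have mbg: "mb t (\<lambda>s. pot_norm L d \<kappa> (\<Phi> s - \<Phi>' s))" by (rule mb_pot_norm[OF finL mbpotD[OF mbpot_diff[OF mbP mbP']]])
  have nn: "\<And>Q. 0 \<le> pot_norm L d \<kappa> Q" by (rule pot_norm_nonneg[OF finL])
  have intnn: "0 \<le> integral {0..t} (\<lambda>s. pot_norm L d \<kappa> (\<Psi> s))" if "mbpot L d t \<Psi>" for \<Psi>
    by (rule int_nonneg[OF mb_pot_norm[OF finL mbpotD[OF that]] nn]) (use t0 in auto)
  have G0: "0 \<le> G" unfolding G_def by (rule int_nonneg[OF mbg nn]) (use t0 in auto)
  have F0: "0 \<le> F" "0 \<le> F'" unfolding F_def F'_def by (rule intnn[OF mbP], rule intnn[OF mbP'])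
  have tpF: "tpot_norm L d \<kappa> t \<Phi> = F / t" "tpot_norm L d \<kappa> t \<Phi>' = F' / t"
    unfolding tpot_norm_def F_def F'_def by simp_all
  have tpG: "tpot_norm L d \<kappa> t (\<lambda>s. \<Phi> s - \<Phi>' s) = G / t" unfolding tpot_norm_def G_def by simp
  have "F / t \<le> lam" "F' / t \<le> lam" using assms(9) unfolding tpF by auto
  then have lamF: "F \<le> lam * t" "F' \<le> lam * t" using t0 by (auto simp: pos_divide_le_eq)
  have lam0: "0 \<le> lam" using assms(9) F0 t0 unfolding tpF by (auto simp: le_max_iff_disj)
  have small: "12 * lam * t \<le> \<delta>" using assms(10) unfolding \<delta>_def .
  define c where "c = 4 * exp (- \<kappa>') / exp 1"
  have c0: "0 \<le> c" unfolding c_def by simp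
  have ce: "exp 1 * c \<le> 4" unfolding c_def using k'0 by simp
  have Dbd: "pot_norm L d \<kappa>' (dyson_term L d \<Psi> \<Theta> n t) \<le> N\<Theta> * (1/3) ^ n"
    if mbQ: "mbpot L d t \<Psi>" and FQ: "integral {0..t} (\<lambda>s. pot_norm L d \<kappa> (\<Psi> s)) \<le> lam * t" for \<Psi> n
  proof (cases "n = 0")
    case True then show ?thesis using pot_norm_mono[OF finL, of \<kappa>' \<kappa> d \<Theta>] assms(8) by (simp add: N\<Theta>_def)
  next
    case False
    define \<epsilon> where "\<epsilon> = \<delta> / real n"
    have eps: "0 < \<epsilon>" using False \<delta>0 by (simp add: \<epsilon>_def)
    have lev_eq: "\<kappa> - real n * \<epsilon> = \<kappa>'" using False unfolding \<epsilon>_def \<delta>_def by simp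
    then have lev: "\<kappa>' \<le> \<kappa> - real n * \<epsilon>" by simp
    define X where "X = integral {0..t} (\<lambda>s. pot_norm L d \<kappa> (\<Psi> s))"
    have X0: "0 \<le> X" unfolding X_def by (rule intnn[OF mbQ])
    have "pot_norm L d (\<kappa> - real n * \<epsilon>) (dyson_term L d \<Psi> \<Theta> n t)
        \<le> (4 * exp (- \<kappa>') / exp 1 / \<epsilon>) ^ n * (integral {0..t} (\<lambda>s. pot_norm L d \<kappa> (\<Psi> s))) ^ n / fact n * pot_norm L d \<kappa> \<Theta>"
      by (rule D_bound[OF finL mbQ eps k'0 lev order_refl]) (use t0 in auto)
    also have "\<dots> = (c * X / \<delta>) ^ n * (real n ^ n / fact n) * N\<Theta>"
      unfolding c_def \<epsilon>_def X_def N\<Theta>_def using False \<delta>0 by (simp add: power_mult_distrib power_divide field_simps)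
    also have "\<dots> \<le> (c * X / \<delta>) ^ n * exp (real n) * N\<Theta>"
      using c0 X0 \<delta>0 N0 by (intro mult_right_mono mult_left_mono R1') auto
    also have "\<dots> = (exp 1 * c * X / \<delta>) ^ n * N\<Theta>"
    proof -
      have e: "exp (real n) = exp 1 ^ n" using exp_of_nat_mult[of n 1] by simp
      have "exp 1 * c * X / \<delta> = exp 1 * (c * X / \<delta>)" by simp
      then show ?thesis unfolding e by (simp only: power_mult_distrib ac_simps)
    qed
    also have "\<dots> \<le> (1/3) ^ n * N\<Theta>"
    proof (intro mult_right_mono power_mono N0)
      show "0 \<le> exp 1 * c * X / \<delta>" using c0 X0 \<delta>0 by simp
      have "exp 1 * c * X \<le> 4 * (lam * t)" using ce X0 FQ c0 unfolding X_def by (intro mult_mono) auto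
      also have "\<dots> \<le> \<delta> / 3" using small by simp
      finally show "exp 1 * c * X / \<delta> \<le> 1/3" using \<delta>0 by (simp add: pos_divide_le_eq)
    qed
    finally show ?thesis unfolding lev_eq by (simp add: ac_simps)
  qed
  have Ebd: "pot_norm L d \<kappa>' (dyson_term L d \<Phi> \<Theta> (Suc k) t - dyson_term L d \<Phi>' \<Theta> (Suc k) t)
      \<le> (c / \<delta>) * N\<Theta> * G * (4 * (5/6) ^ k)" for k
  proof -
    define \<epsilon> where "\<epsilon> = \<delta> / real (Suc k)"
    have eps: "0 < \<epsilon>" using \<delta>0 by (simp add: \<epsilon>_def)
    have lev_eq: "\<kappa> - real (Suc k) * \<epsilon> = \<kappa>'" unfolding \<epsilon>_def \<delta>_def by simp
    then have lev: "\<kappa>' \<le> \<kappa> - real (Suc k) * \<epsilon>" by simp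
    have "pot_norm L d (\<kappa> - real (Suc k) * \<epsilon>) (dyson_term L d \<Phi> \<Theta> (Suc k) t - dyson_term L d \<Phi>' \<Theta> (Suc k) t)
      \<le> (4 * exp (- \<kappa>') / exp 1 / \<epsilon>) ^ Suc k * pot_norm L d \<kappa> \<Theta> * integral {0..t} (\<lambda>s. pot_norm L d \<kappa> (\<Phi> s - \<Phi>' s))
       * (integral {0..t} (\<lambda>s. pot_norm L d \<kappa> (\<Phi> s)) + integral {0..t} (\<lambda>s. pot_norm L d \<kappa> (\<Phi>' s))) ^ k / fact k"
      by (rule E_bound[OF finL mbP mbP' eps k'0 lev order_refl]) (use t0 in auto)
    also have "\<dots> = (c / \<delta>) * N\<Theta> * G * (real (Suc k) * (((c / \<delta>) * (F + F')) ^ k * (real (Suc k) ^ k / fact k)))"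
    proof -
      have ce': "4 * exp (- \<kappa>') / exp 1 / \<epsilon> = real (Suc k) * (c / \<delta>)" unfolding c_def \<epsilon>_def by simp
      show ?thesis unfolding F_def[symmetric] F'_def[symmetric] G_def[symmetric] N\<Theta>_def[symmetric] ce'
        by (rule alg2)
    qed
    also have "\<dots> \<le> (c / \<delta>) * N\<Theta> * G * (real (Suc k) * (((c / \<delta>) * (F + F')) ^ k * exp (real k)))"
      using c0 N0 G0 \<delta>0 F0 by (intro mult_left_mono R1) auto
    also have "\<dots> = (c / \<delta>) * N\<Theta> * G * (real (Suc k) * (exp 1 * c * (F + F') / \<delta>) ^ k)"
    proof -
      have e: "exp (real k) = exp 1 ^ k" using exp_of_nat_mult[of k 1] by simp
      have "exp 1 * c * (F + F') / \<delta> = exp 1 * ((c / \<delta>) * (F + F'))" by simp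
      then show ?thesis unfolding e by (simp only: power_mult_distrib ac_simps)
    qed
    also have "\<dots> \<le> (c / \<delta>) * N\<Theta> * G * (real (Suc k) * (2/3) ^ k)"
    proof (intro mult_left_mono power_mono)
      show "0 \<le> exp 1 * c * (F + F') / \<delta>" using c0 F0 \<delta>0 by simp
      have "exp 1 * c * (F + F') \<le> 4 * (2 * (lam * t))" using ce F0 lamF c0 by (intro mult_mono) auto
      also have "\<dots> \<le> \<delta> * (2/3)" using small by simp
      finally show "exp 1 * c * (F + F') / \<delta> \<le> 2/3" using \<delta>0 by (simp add: pos_divide_le_eq)
    qed (use c0 N0 G0 \<delta>0 in auto)
    also have "\<dots> \<le> (c / \<delta>) * N\<Theta> * G * (4 * (5/6) ^ k)"
      using c0 N0 G0 \<delta>0 by (intro mult_left_mono R2) auto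
    finally show ?thesis unfolding lev_eq .
  qed
  have FQ: "integral {0..t} (\<lambda>s. pot_norm L d \<kappa> (\<Phi> s)) \<le> lam * t" "integral {0..t} (\<lambda>s. pot_norm L d \<kappa> (\<Phi>' s)) \<le> lam * t"
    using lamF unfolding F_def F'_def by auto
  have entryD: "cmod (dyson_term L d \<Psi> \<Theta> n t Z \<sigma> \<tau>) \<le> N\<Theta> * (1/3) ^ n"
    if mbQ: "mbpot L d t \<Psi>" and FQ: "integral {0..t} (\<lambda>s. pot_norm L d \<kappa> (\<Psi> s)) \<le> lam * t"
      and Z: "Z \<subseteq> L" "Z \<noteq> {}" and \<sigma>: "\<sigma> \<in> confs L d" "\<tau> \<in> confs L d" for \<Psi> n Z \<sigma> \<tau>
  proof -
    obtain x where x: "x \<in> Z" using Z(2) by auto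
    have "cmod (dyson_term L d \<Psi> \<Theta> n t Z \<sigma> \<tau>) \<le> opnorm L d (dyson_term L d \<Psi> \<Theta> n t Z)"
      by (rule entry_le_opnorm[OF finL \<sigma>])
    also have "\<dots> \<le> pot_norm L d \<kappa>' (dyson_term L d \<Psi> \<Theta> n t)" by (rule opnorm_le_pot_norm[OF finL Z(1) x k'0])
    also have "\<dots> \<le> N\<Theta> * (1/3) ^ n" by (rule Dbd[OF mbQ FQ])
    finally show ?thesis .
  qed
  have sumg: "summable (\<lambda>n. N\<Theta> * (1/3::real) ^ n)" by (intro summable_mult summable_geometric) simp
  have summ: "summable (\<lambda>n. \<i> ^ n * dyson_term L d \<Psi> \<Theta> n t Z \<sigma> \<tau>)"
    if mbQ: "mbpot L d t \<Psi>" and FQ: "integral {0..t} (\<lambda>s. pot_norm L d \<kappa> (\<Psi> s)) \<le> lam * t"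
      and Z: "Z \<subseteq> L" "Z \<noteq> {}" and \<sigma>: "\<sigma> \<in> confs L d" "\<tau> \<in> confs L d" for \<Psi> Z \<sigma> \<tau>
  proof (rule summable_comparison_test[OF _ sumg], intro exI allI impI)
    fix n :: nat
    show "norm (\<i> ^ n * dyson_term L d \<Psi> \<Theta> n t Z \<sigma> \<tau>) \<le> N\<Theta> * (1/3) ^ n"
      using entryD[OF mbQ FQ Z \<sigma>] by (simp add: norm_mult norm_power)
  qed
  define Q where "Q n = (\<lambda>Z \<sigma> \<tau>. \<i> ^ n * (dyson_term L d \<Phi> \<Theta> n t Z \<sigma> \<tau> - dyson_term L d \<Phi>' \<Theta> n t Z \<sigma> \<tau>))" for n
  have sumsQ: "(\<lambda>n. Q n Z \<sigma> \<tau>) sums (evol L d \<Phi> t \<Theta> - evol L d \<Phi>' t \<Theta>) Z \<sigma> \<tau>"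
    if Z: "Z \<subseteq> L" "Z \<noteq> {}" and \<sigma>: "\<sigma> \<in> confs L d" "\<tau> \<in> confs L d" for Z \<sigma> \<tau>
  proof -
    have s1: "(\<lambda>n. \<i> ^ n * dyson_term L d \<Phi> \<Theta> n t Z \<sigma> \<tau>) sums evol L d \<Phi> t \<Theta> Z \<sigma> \<tau>"
      unfolding evol_def using summable_sums[OF summ[OF mbP FQ(1) Z \<sigma>]] by simp
    have s2: "(\<lambda>n. \<i> ^ n * dyson_term L d \<Phi>' \<Theta> n t Z \<sigma> \<tau>) sums evol L d \<Phi>' t \<Theta> Z \<sigma> \<tau>"
      unfolding evol_def using summable_sums[OF summ[OF mbP' FQ(2) Z \<sigma>]] by simp
    show ?thesis using sums_diff[OF s1 s2] unfolding Q_def by (simp add: right_diff_distrib)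
  qed
  define \<beta> where "\<beta> n = (if n = 0 then 0 else (c / \<delta>) * N\<Theta> * G * (4 * (5/6) ^ (n - 1)))" for n
  have Qb: "pot_norm L d \<kappa>' (Q n) \<le> \<beta> n" for n
  proof (cases n)
    case 0
    have "Q n = (\<lambda>_ _ _. 0)" unfolding Q_def 0 by (simp add: fun_eq_iff)
    then show ?thesis using pot_norm_zero[OF finL] by (simp add: \<beta>_def 0)
  next
    case (Suc k)
    have "pot_norm L d \<kappa>' (Q n) \<le> cmod (\<i> ^ n) * pot_norm L d \<kappa>' (dyson_term L d \<Phi> \<Theta> n t - dyson_term L d \<Phi>' \<Theta> n t)"
      using pot_norm_smult[OF finL, where \<kappa>="\<kappa>'" and c="\<i> ^ n" and Q="dyson_term L d \<Phi> \<Theta> n t - dyson_term L d \<Phi>' \<Theta> n t"]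
      unfolding Q_def minus_apply .
    also have "\<dots> = pot_norm L d \<kappa>' (dyson_term L d \<Phi> \<Theta> n t - dyson_term L d \<Phi>' \<Theta> n t)" by (simp add: norm_power)
    also have "\<dots> \<le> \<beta> n" unfolding \<beta>_def Suc using Ebd[of k] by simp
    finally show ?thesis .
  qed
  have bS: "(\<lambda>k. \<beta> (Suc k)) = (\<lambda>k. ((c / \<delta>) * N\<Theta> * G * 4) * (5/6) ^ k)" by (simp add: \<beta>_def fun_eq_iff)
  have sb1: "summable (\<lambda>k. \<beta> (Suc k))" unfolding bS by (intro summable_mult summable_geometric) simp
  then have sb: "summable \<beta>" by (simp add: summable_Suc_iff)
  have "(\<Sum>k. \<beta> (Suc k)) = ((c / \<delta>) * N\<Theta> * G * 4) * (1 / (1 - 5/6))"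
    unfolding bS by (subst suminf_mult) (auto intro: summable_geometric simp: suminf_geometric)
  moreover have "(\<Sum>k. \<beta> (Suc k)) = suminf \<beta> - \<beta> 0" by (rule suminf_split_head[OF sb])
  ultimately have sbv: "suminf \<beta> = 24 * (c / \<delta>) * N\<Theta> * G" by (simp add: \<beta>_def)
  have sumQ: "summable (\<lambda>n. pot_norm L d \<kappa>' (Q n))"
  proof (rule summable_comparison_test[OF _ sb], intro exI allI impI)
    fix n :: nat show "norm (pot_norm L d \<kappa>' (Q n)) \<le> \<beta> n" using Qb[of n] pot_norm_nonneg[OF finL, where \<kappa>="\<kappa>'" and Q="Q n"] by simp
  qed
  have "pot_norm L d \<kappa>' (evol L d \<Phi> t \<Theta> - evol L d \<Phi>' t \<Theta>) \<le> (\<Sum>n. pot_norm L d \<kappa>' (Q n))"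
    by (rule pot_norm_suminf[OF finL sumsQ sumQ])
  also have "\<dots> \<le> suminf \<beta>" by (rule suminf_le[OF Qb sumQ sb])
  also have "\<dots> = 24 * (c / \<delta>) * N\<Theta> * G" by (rule sbv)
  also have "\<dots> \<le> C ^ 3 * M * t * N\<Theta> * (G / t)"
  proof -
    have M: "M = 72 / (\<kappa>' * \<delta>)" using assms(11) unfolding \<delta>_def .
    have M0: "0 \<le> M" unfolding M using assms(7) \<delta>0 by simp
    have C1: "1 \<le> C" using assms(12) M0 lam0 t0 by simp
    have C3: "1 \<le> C ^ 3" using C1 by simp
    have e2: "2 \<le> exp (1::real)" using exp_ge_add_one_self[of 1] by simp
    have "24 * c * \<kappa>' = 96 * (\<kappa>' * exp (- \<kappa>')) / exp 1" unfolding c_def by simp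
    also have "\<dots> \<le> 96 * exp (-1) / exp 1" using kexp[OF assms(7)] by (intro divide_right_mono mult_left_mono) auto
    also have "\<dots> = 96 / (exp 1 * exp 1)" by (simp add: exp_minus field_simps)
    also have "\<dots> \<le> 96 / (2 * 2)" using e2 by (intro divide_left_mono mult_mono) auto
    also have "\<dots> \<le> 72" by simp
    finally have "24 * c * \<kappa>' \<le> 72" .
    then have "24 * c \<le> 72 / \<kappa>'" using assms(7) by (simp add: pos_le_divide_eq)
    then have "24 * (c / \<delta>) \<le> M" unfolding M using \<delta>0 by (simp add: field_simps)
    also have "\<dots> \<le> C ^ 3 * M" using C3 M0 by (simp add: mult_le_cancel_right1)
    finally have key: "24 * (c / \<delta>) \<le> C ^ 3 * M" .
    have "24 * (c / \<delta>) * N\<Theta> * G = 24 * (c / \<delta>) * (N\<Theta> * G)" by (simp only: mult.assoc)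
    also have "\<dots> \<le> C ^ 3 * M * (N\<Theta> * G)" by (rule mult_right_mono[OF key]) (simp add: N0 G0)
    also have "\<dots> = C ^ 3 * M * t * N\<Theta> * (G / t)" using t0 by simp
    finally show ?thesis .
  qed
  finally show ?thesis unfolding tpG N\<Theta>_def .
qed


end
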